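(* Let $R$ be $\mathbb{Z}$ or $\mathbb{Z}/m\mathbb{Z}$ with $m\ge2$, and let $\Lambda$ be the weight lattice of a semisimple root system all of whose simple components are of type ${\rm A}$ or type ${\rm C}$, with Weyl group $W$ and fundamental weights $\omega_1,\ldots,\omega_n$. For $i=1,\ldots,n$ let $\rho_i=\sum_{\lambda\in W(\omega_i)}e^{\lambda}-|W(\omega_i)|\in R[\Lambda]$. Then the $n$-tuple $(\rho_1,\ldots,\rho_n)$ satisfies the generalized flatness condition with respect to some $\mathbb{Z}$-basis of $\Lambda$.
   Context: For a free abelian group $\Lambda$ with basis $x_1,\ldots,x_n$, $R[\Lambda]$ is identified with $R[x_1^{\pm1},\ldots,x_n^{\pm1}]$ and $\Lambda_i$ is the subgroup spanned by $x_1,\ldots,x_i$. A polynomial $p\in R[\Lambda_i]$ is a divisor with respect to $x_i$ if, writing $p=p_kx_i^k+\cdots+p_mx_i^m$ with $p_j\in R[\Lambda_{i-1}]$, $p_k\ne0$, the leading coefficient $p_k$ is a monic monomial in $x_1,\ldots,x_{i-1}$. An $n$-tuple $(q_1,\ldots,q_n)$ satisfies the flatness condition (w.r.t. the basis) if $q_i\in R[\Lambda_i]$ and $q_i$ is a divisor with respect to $x_i$ for every $i$; it satisfies the generalized flatness condition if there exists $A\in GL_n(R[\Lambda])$ such that $(q_1,\ldots,q_n)A$ satisfies the flatness condition. For type ${\rm A}_n$: $\Lambda=\mathbb{Z}^{n+1}/\mathbb{Z}(e_1+\cdots+e_{n+1})$, $\omega_i=\bar e_1+\cdots+\bar e_i$,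 $W=S_{n+1}$ permuting the $e_j$. For type ${\rm C}_n$: $\Lambda=\mathbb{Z}^n$, $\omega_i=e_1+\cdots+e_i$, $W$ acts by permutations and sign changes of the $e_j$. *)

theory Defs
  imports "HOL-Library.Poly_Mapping" "HOL-Library.Function_Algebras"
          "HOL-Combinatorics.Permutations"
begin

datatype cartan_type = TypeA | TypeC

text \<open>A semisimple root system with components of type A or C is given by a list of
  components (type, rank).  Weights live in the ambient group of functions
  (c, j) \<mapsto> integer: component c, coordinate e_j.
  Type A_r: Z^(r+1)/Z(e_1+...+e_(r+1)); a class is represented by its unique
  representative with (r+1)-st coordinate 0, so coordinates j = 1..r.
  Type C_r: Z^r, coordinates j = 1..r.\<close>

type_synonym weight = "nat \<times> nat \<Rightarrow> int"

definition weight_lattice :: "(cartan_type \<times> nat) list \<Rightarrow> weight set" where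
  "weight_lattice comps =
     {v. \<forall>c j. v (c, j) \<noteq> 0 \<longrightarrow> c < length comps \<and> 1 \<le> j \<and> j \<le> snd (comps ! c)}"

text \<open>number of coordinates e_j permuted by the Weyl group of a component\<close>
definition n_coords :: "cartan_type \<times> nat \<Rightarrow> nat" where
  "n_coords tr = (case fst tr of TypeA \<Rightarrow> snd tr + 1 | TypeC \<Rightarrow> snd tr)"

text \<open>Weyl group element: per component a permutation sigma of {1..n_coords} and
  signs eps (all +1 in type A).  It acts by e_j \<mapsto> eps_j e_(sigma j).\<close>
definition weyl_group :: "(cartan_type \<times> nat) list \<Rightarrow>
    ((nat \<Rightarrow> nat \<Rightarrow> nat) \<times> (nat \<Rightarrow> nat \<Rightarrow> int)) set" where
  "weyl_group comps = {(\<sigma>, \<epsilon>). \<forall>c < length comps.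
      \<sigma> c permutes {1..n_coords (comps ! c)} \<and> (\<forall>j. \<epsilon> c j \<in> {1, -1}) \<and>
      (fst (comps ! c) = TypeA \<longrightarrow> (\<forall>j. \<epsilon> c j = 1))}"

definition weyl_act :: "(cartan_type \<times> nat) list \<Rightarrow>
    ((nat \<Rightarrow> nat \<Rightarrow> nat) \<times> (nat \<Rightarrow> nat \<Rightarrow> int)) \<Rightarrow> weight \<Rightarrow> weight" where
  "weyl_act comps w v = (\<lambda>(c, k).
     if c < length comps \<and> 1 \<le> k \<and> k \<le> snd (comps ! c) then
       (case fst (comps ! c) of
          TypeA \<Rightarrow> v (c, inv (fst w c) k) - v (c, inv (fst w c) (snd (comps ! c) + 1))
        | TypeC \<Rightarrow> snd w c (inv (fst w c) k) * v (c, inv (fst w c) k))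
     else 0)"

definition weyl_orbit :: "(cartan_type \<times> nat) list \<Rightarrow> weight \<Rightarrow> weight set" where
  "weyl_orbit comps v = {weyl_act comps w v | w. w \<in> weyl_group comps}"

definition fund_weight :: "nat \<Rightarrow> nat \<Rightarrow> weight" where
  "fund_weight c i = (\<lambda>(c', j). if c' = c \<and> 1 \<le> j \<and> j \<le> i then 1 else 0)"

definition fund_weights :: "(cartan_type \<times> nat) list \<Rightarrow> weight list" where
  "fund_weights comps =
     concat (map (\<lambda>c. map (fund_weight c) [1..<snd (comps ! c) + 1]) [0..<length comps])"

text \<open>R[Lambda] inside the group ring of the ambient group\<close>
definition group_ring :: "'g set \<Rightarrow> ('g \<Rightarrow>\<^sub>0 'r::zero) set" where
  "group_ring L = {p. Poly_Mapping.keys p \<subseteq> L}"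

definition rho :: "(cartan_type \<times> nat) list \<Rightarrow> weight \<Rightarrow> (weight \<Rightarrow>\<^sub>0 'r::comm_ring_1)" where
  "rho comps \<omega> = (\<Sum>x\<in>weyl_orbit comps \<omega>. Poly_Mapping.single x 1)
                   - of_nat (card (weyl_orbit comps \<omega>))"

definition zsmult :: "int \<Rightarrow> weight \<Rightarrow> weight" where
  "zsmult k v = (\<lambda>x. k * v x)"

text \<open>Lambda_i: subgroup spanned by the first i basis vectors (0-indexed list)\<close>
definition span_first :: "weight list \<Rightarrow> nat \<Rightarrow> weight set" where
  "span_first b i = {(\<Sum>j<i. zsmult (k j) (b ! j)) | k. True}"

definition is_Z_basis :: "weight set \<Rightarrow> weight list \<Rightarrow> bool" where
  "is_Z_basis L b \<longleftrightarrow> set b \<subseteq> L \<and>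
     (\<forall>x\<in>L. \<exists>!k. (\<forall>i. length b \<le> i \<longrightarrow> k i = 0) \<and>
                 x = (\<Sum>i<length b. zsmult (k i) (b ! i)))"

text \<open>q is a divisor w.r.t. x_i = e^(b!i): writing q = sum_j p_j x_i^j with
  p_j in R[Lambda_(i-1)], the lowest nonzero p_k is a monic (Laurent) monomial x^mu.\<close>
definition is_divisor :: "weight list \<Rightarrow> nat \<Rightarrow> (weight \<Rightarrow>\<^sub>0 'r::comm_ring_1) \<Rightarrow> bool" where
  "is_divisor b i q \<longleftrightarrow>
     (\<exists>k \<mu>. \<mu> \<in> span_first b i \<and> Poly_Mapping.lookup q (\<mu> + zsmult k (b ! i)) = 1 \<and>
        (\<forall>x\<in>Poly_Mapping.keys q. \<forall>\<mu>' k'. \<mu>' \<in> span_first b i \<and> x = \<mu>' + zsmult k' (b ! i) \<longrightarrow>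
            k \<le> k' \<and> (k' = k \<longrightarrow> \<mu>' = \<mu>)))"

definition flat :: "weight list \<Rightarrow> (nat \<Rightarrow> (weight \<Rightarrow>\<^sub>0 'r::comm_ring_1)) \<Rightarrow> bool" where
  "flat b q \<longleftrightarrow> (\<forall>i < length b.
      q i \<in> group_ring (span_first b (Suc i)) \<and> is_divisor b i (q i))"

definition in_GL :: "nat \<Rightarrow> weight set \<Rightarrow> (nat \<Rightarrow> nat \<Rightarrow> (weight \<Rightarrow>\<^sub>0 'r::comm_ring_1)) \<Rightarrow> bool" where
  "in_GL n L A \<longleftrightarrow> (\<forall>i<n. \<forall>j<n. A i j \<in> group_ring L) \<and>
     (\<exists>B. (\<forall>i<n. \<forall>j<n. B i j \<in> group_ring L) \<and>
        (\<forall>i<n. \<forall>j<n. (\<Sum>k<n. A i k * B k j) = (if i = j then 1 else 0)) \<and>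
        (\<forall>i<n. \<forall>j<n. (\<Sum>k<n. B i k * A k j) = (if i = j then 1 else 0)))"

definition gen_flat :: "weight set \<Rightarrow> weight list \<Rightarrow> (nat \<Rightarrow> (weight \<Rightarrow>\<^sub>0 'r::comm_ring_1)) \<Rightarrow> bool" where
  "gen_flat L b q \<longleftrightarrow>
     (\<exists>A. in_GL (length b) L A \<and> flat b (\<lambda>j. \<Sum>i<length b. q i * A i j))"

end

theory Submission
  imports Defs
begin

definition sr :: "'a::comm_ring_1 set \<Rightarrow> bool" where
  "sr Q \<longleftrightarrow> 0 \<in> Q \<and> 1 \<in> Q \<and> (\<forall>a\<in>Q. \<forall>b\<in>Q. a + b \<in> Q \<and> a * b \<in> Q \<and> - a \<in> Q)"

lemma sr_0: "sr Q \<Longrightarrow> 0 \<in> Q" and sr_1: "sr Q \<Longrightarrow> 1 \<in> Q"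
  and sr_add: "sr Q \<Longrightarrow> a \<in> Q \<Longrightarrow> b \<in> Q \<Longrightarrow> a + b \<in> Q"
  and sr_mult: "sr Q \<Longrightarrow> a \<in> Q \<Longrightarrow> b \<in> Q \<Longrightarrow> a * b \<in> Q"
  and sr_uminus: "sr Q \<Longrightarrow> a \<in> Q \<Longrightarrow> - a \<in> Q"
  by (auto simp: sr_def)

lemma sr_diff: "sr Q \<Longrightarrow> a \<in> Q \<Longrightarrow> b \<in> Q \<Longrightarrow> a - b \<in> Q"
  using sr_add[of Q a "-b"] sr_uminus[of Q b] by simp

lemma sr_sum: "sr Q \<Longrightarrow> (\<And>i. i \<in> I \<Longrightarrow> f i \<in> Q) \<Longrightarrow> sum f I \<in> Q"
  by (induction I rule: infinite_finite_induct) (auto intro: sr_0 sr_add)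

lemma sr_power: "sr Q \<Longrightarrow> a \<in> Q \<Longrightarrow> a ^ k \<in> Q"
  by (induction k) (auto intro: sr_1 sr_mult)

lemma sr_of_nat: "sr Q \<Longrightarrow> of_nat k \<in> Q"
  by (induction k) (auto intro: sr_0 sr_1 sr_add)

definition gl :: "'a::comm_ring_1 set \<Rightarrow> nat \<Rightarrow> (nat \<Rightarrow> nat \<Rightarrow> 'a) \<Rightarrow> bool" where
  "gl Q n A \<longleftrightarrow> (\<forall>i<n. \<forall>j<n. A i j \<in> Q) \<and>
     (\<exists>B. (\<forall>i<n. \<forall>j<n. B i j \<in> Q) \<and>
        (\<forall>i<n. \<forall>j<n. (\<Sum>k<n. A i k * B k j) = (if i = j then 1 else 0)) \<and>
        (\<forall>i<n. \<forall>j<n. (\<Sum>k<n. B i k * A k j) = (if i = j then 1 else 0)))"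

lemma in_GL_gl: "in_GL n L A = gl (group_ring L) n A"
  unfolding in_GL_def gl_def by simp

definition eqv :: "'a::comm_ring_1 set \<Rightarrow> nat \<Rightarrow> (nat \<Rightarrow> 'a) \<Rightarrow> (nat \<Rightarrow> 'a) \<Rightarrow> bool" where
  "eqv Q n q q' \<longleftrightarrow> (\<exists>A. gl Q n A \<and> (\<forall>j<n. q' j = (\<Sum>i<n. q i * A i j)))"

lemma sum_if_eq: "(\<Sum>k<(n::nat). (if k = j then f k else 0)) = (if j < n then f j else (0::'a::comm_monoid_add))"
  by (simp add: sum.delta)

lemma mat_id_left:
  assumes "i < (n::nat)" shows "(\<Sum>k<n. (if i = k then 1 else 0) * C k l) = (C i l :: 'a::comm_ring_1)"
  by (subst sum.cong[OF refl, of _ _ "\<lambda>k. if i = k then C k l else 0"]) (auto simp: assms)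

lemma mat_id_right:
  assumes "l < (n::nat)" shows "(\<Sum>k<n. C i k * (if k = l then 1 else 0)) = (C i l :: 'a::comm_ring_1)"
  by (subst sum.cong[OF refl, of _ _ "\<lambda>k. if k = l then C i k else 0"]) (auto simp: assms)

lemma eqv_refl: assumes "sr Q" shows "eqv Q n q q"
proof -
  let ?I = "\<lambda>i j. if i = j then 1 else 0 :: 'a"
  have e: "(\<Sum>k<n. ?I i k * ?I k j) = ?I i j" if "i < n" for i j
    using that by (rule mat_id_left)
  have g: "gl Q n ?I" unfolding gl_def
    using e by (intro conjI exI[of _ ?I]) (auto simp: sr_0[OF assms] sr_1[OF assms])
  have "q j = (\<Sum>i<n. q i * ?I i j)" if "j < n" for j
    using mat_id_right[OF that, of "\<lambda>_ i. q i" 0] by simp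
  then show ?thesis unfolding eqv_def using g by blast
qed

lemma eqv_cong: "eqv Q n q q' \<Longrightarrow> (\<And>j. j < n \<Longrightarrow> q j = p j) \<Longrightarrow> (\<And>j. j < n \<Longrightarrow> q' j = p' j) \<Longrightarrow> eqv Q n p p'"
proof -
  assume "eqv Q n q q'" and h1: "\<And>j. j < n \<Longrightarrow> q j = p j" and h2: "\<And>j. j < n \<Longrightarrow> q' j = p' j"
  then obtain A where A: "gl Q n A" "\<forall>j<n. q' j = (\<Sum>i<n. q i * A i j)" unfolding eqv_def by blast
  have "p' j = (\<Sum>i<n. p i * A i j)" if "j < n" for j
    using A(2) that h1 h2 by (auto intro!: sum.cong)
  then show ?thesis unfolding eqv_def using A(1) by blast
qed

lemma mat_assoc:
  "(\<Sum>k<(n::nat). (\<Sum>j<n. A i j * B j k) * C k l) = (\<Sum>j<n. A i j * (\<Sum>k<n. B j k * C k l :: 'a::comm_ring_1))"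
proof -
  have "(\<Sum>k<n. (\<Sum>j<n. A i j * B j k) * C k l) = (\<Sum>k<n. \<Sum>j<n. A i j * (B j k * C k l))"
    by (simp add: sum_distrib_right mult.assoc)
  also have "\<dots> = (\<Sum>j<n. \<Sum>k<n. A i j * (B j k * C k l))"
    by (rule sum.swap)
  also have "\<dots> = (\<Sum>j<n. A i j * (\<Sum>k<n. B j k * C k l))"
    by (simp add: sum_distrib_left)
  finally show ?thesis .
qed

lemma gl_mult: assumes Q: "sr Q" and "gl Q n A" "gl Q n A'"
  shows "gl Q n (\<lambda>i l. \<Sum>j<n. A i j * A' j l)"
proof -
  obtain B where B: "\<forall>i<n. \<forall>j<n. B i j \<in> Q"
    "\<forall>i<n. \<forall>j<n. (\<Sum>k<n. A i k * B k j) = (if i = j then 1 else 0)"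
    "\<forall>i<n. \<forall>j<n. (\<Sum>k<n. B i k * A k j) = (if i = j then 1 else 0)"
    and A: "\<forall>i<n. \<forall>j<n. A i j \<in> Q" using assms(2) unfolding gl_def by auto
  obtain B' where B': "\<forall>i<n. \<forall>j<n. B' i j \<in> Q"
    "\<forall>i<n. \<forall>j<n. (\<Sum>k<n. A' i k * B' k j) = (if i = j then 1 else 0)"
    "\<forall>i<n. \<forall>j<n. (\<Sum>k<n. B' i k * A' k j) = (if i = j then 1 else 0)"
    and A': "\<forall>i<n. \<forall>j<n. A' i j \<in> Q" using assms(3) unfolding gl_def by auto
  let ?M = "\<lambda>i l. \<Sum>j<n. A i j * A' j l"
  let ?N = "\<lambda>i l. \<Sum>j<n. B' i j * B j l"
  have 1: "(\<Sum>k<n. ?M i k * ?N k l) = (if i = l then 1 else 0)" if "i < n" "l < n" for i l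
  proof -
    have "(\<Sum>k<n. ?M i k * ?N k l) = (\<Sum>j<n. A i j * (\<Sum>k<n. A' j k * ?N k l))"
      by (rule mat_assoc)
    also have "\<dots> = (\<Sum>j<n. A i j * (\<Sum>m<n. (\<Sum>k<n. A' j k * B' k m) * B m l))"
      by (simp only: mat_assoc)
    also have "\<dots> = (\<Sum>j<n. A i j * (\<Sum>m<n. (if j = m then 1 else 0) * B m l))"
      using B'(2) by simp
    also have "\<dots> = (\<Sum>j<n. A i j * B j l)"
      by (intro sum.cong refl arg_cong2[where f="(*)"] mat_id_left) auto
    finally show ?thesis using B(2) that by simp
  qed
  have 2: "(\<Sum>k<n. ?N i k * ?M k l) = (if i = l then 1 else 0)" if "i < n" "l < n" for i l
  proof -
    have "(\<Sum>k<n. ?N i k * ?M k l) = (\<Sum>j<n. B' i j * (\<Sum>k<n. B j k * ?M k l))"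
      by (rule mat_assoc)
    also have "\<dots> = (\<Sum>j<n. B' i j * (\<Sum>m<n. (\<Sum>k<n. B j k * A k m) * A' m l))"
      by (simp only: mat_assoc)
    also have "\<dots> = (\<Sum>j<n. B' i j * (\<Sum>m<n. (if j = m then 1 else 0) * A' m l))"
      using B(3) by simp
    also have "\<dots> = (\<Sum>j<n. B' i j * A' j l)"
      by (intro sum.cong refl arg_cong2[where f="(*)"] mat_id_left) auto
    finally show ?thesis using B'(3) that by simp
  qed
  show ?thesis unfolding gl_def
    apply (intro conjI exI[of _ ?N])
    using A A' B B' 1 2 by (auto intro!: sr_sum[OF Q] sr_mult[OF Q])
qed

lemma eqv_trans: assumes Q: "sr Q" and "eqv Q n q q'" "eqv Q n q' q''" shows "eqv Q n q q''"
proof -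
  obtain A where A: "gl Q n A" "\<forall>j<n. q' j = (\<Sum>i<n. q i * A i j)" using assms(2) eqv_def by blast
  obtain A' where A': "gl Q n A'" "\<forall>j<n. q'' j = (\<Sum>i<n. q' i * A' i j)" using assms(3) eqv_def by blast
  have "q'' l = (\<Sum>i<n. q i * (\<Sum>j<n. A i j * A' j l))" if "l < n" for l
  proof -
    have "q'' l = (\<Sum>j<n. (\<Sum>i<n. q i * A i j) * A' j l)" using A A' that by simp
    also have "\<dots> = (\<Sum>i<n. q i * (\<Sum>j<n. A i j * A' j l))"
      by (rule mat_assoc[where A="\<lambda>_ i. q i" and i=0])
    finally show ?thesis .
  qed
  then show ?thesis unfolding eqv_def using gl_mult[OF Q A(1) A'(1)] by blast
qed

lemma sum_split_add: "(\<Sum>k<n + (m::nat). f k) = (\<Sum>k<n. f k) + (\<Sum>k<m. f (n + k)::'a::comm_monoid_add)"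
  by (induction m) (auto simp: add.assoc)

lemma eqv_block:
  assumes Q: "sr Q" and e1: "eqv Q n q q'" and e2: "eqv Q m p p'"
  shows "eqv Q (n + m) (\<lambda>i. if i < n then q i else p (i - n)) (\<lambda>i. if i < n then q' i else p' (i - n))"
proof -
  obtain A B where A: "\<forall>i<n. \<forall>j<n. A i j \<in> Q" "\<forall>i<n. \<forall>j<n. B i j \<in> Q"
    "\<forall>i<n. \<forall>j<n. (\<Sum>k<n. A i k * B k j) = (if i = j then 1 else 0)"
    "\<forall>i<n. \<forall>j<n. (\<Sum>k<n. B i k * A k j) = (if i = j then 1 else 0)"
    "\<forall>j<n. q' j = (\<Sum>i<n. q i * A i j)"
    using e1 unfolding eqv_def gl_def by blast
  obtain A' B' where A': "\<forall>i<m. \<forall>j<m. A' i j \<in> Q" "\<forall>i<m. \<forall>j<m. B' i j \<in> Q"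
    "\<forall>i<m. \<forall>j<m. (\<Sum>k<m. A' i k * B' k j) = (if i = j then 1 else 0)"
    "\<forall>i<m. \<forall>j<m. (\<Sum>k<m. B' i k * A' k j) = (if i = j then 1 else 0)"
    "\<forall>j<m. p' j = (\<Sum>i<m. p i * A' i j)"
    using e2 unfolding eqv_def gl_def by blast
  define blk where "blk = (\<lambda>(X::nat\<Rightarrow>nat\<Rightarrow>'a) Y i j. if i < n \<and> j < n then X i j
      else if n \<le> i \<and> n \<le> j then Y (i - n) (j - n) else 0)"
  have prod: "(\<Sum>k<n+m. blk X Y i k * blk Z W k j) =
      (if i < n \<and> j < n then (\<Sum>k<n. X i k * Z k j)
       else if n \<le> i \<and> n \<le> j then (\<Sum>k<m. Y (i-n) k * W k (j-n)) else 0)" for X Y Z W i j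
    unfolding sum_split_add by (auto simp: blk_def)
  have mem: "\<forall>i<n+m. \<forall>j<n+m. blk X Y i j \<in> Q" if "\<forall>i<n. \<forall>j<n. X i j \<in> Q" "\<forall>i<m. \<forall>j<m. Y i j \<in> Q" for X Y
    using that sr_0[OF Q] by (auto simp: blk_def)
  have g: "gl Q (n+m) (blk A A')" unfolding gl_def
    apply (intro conjI mem exI[of _ "blk B B'"])
    using A A' by (auto simp: prod)
  have "(if j < n then q' j else p' (j - n)) =
        (\<Sum>i<n+m. (if i < n then q i else p (i - n)) * blk A A' i j)" if "j < n + m" for j
    using that A(5) A'(5) unfolding sum_split_add by (auto simp: blk_def)
  then show ?thesis unfolding eqv_def using g by blast
qed

lemma eqv_rev:
  assumes Q: "sr Q" and s: "\<And>j. j < n \<Longrightarrow> s j \<in> Q" "\<And>j. j < n \<Longrightarrow> s j * s j = 1"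
  shows "eqv Q n q (\<lambda>j. s j * q (n - 1 - j))"
proof -
  define M where "M = (\<lambda>i j. if i + j = n - 1 then s j else 0)"
  define N where "N = (\<lambda>i j. if i + j = n - 1 then s i else 0)"
  have 1: "(\<Sum>k<n. M i k * N k j) = (if i = j then 1 else 0)" if "i < n" "j < n" for i j
  proof -
    have "(\<Sum>k<n. M i k * N k j) = (\<Sum>k<n. if k = n - 1 - i then (if i = j then 1 else 0) else 0)"
      using that s by (intro sum.cong refl) (auto simp: M_def N_def)
    then show ?thesis using that by simp
  qed
  have 2: "(\<Sum>k<n. N i k * M k j) = (if i = j then 1 else 0)" if "i < n" "j < n" for i j
  proof -
    have "(\<Sum>k<n. N i k * M k j) = (\<Sum>k<n. if k = n - 1 - i then (if i = j then 1 else 0) else 0)"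
      using that s by (intro sum.cong refl) (auto simp: M_def N_def)
    then show ?thesis using that by simp
  qed
  have g: "gl Q n M" unfolding gl_def
    apply (intro conjI exI[of _ N])
    using 1 2 s sr_0[OF Q] by (auto simp: M_def N_def)
  have "s j * q (n - 1 - j) = (\<Sum>i<n. q i * M i j)" if "j < n" for j
  proof -
    have "(\<Sum>i<n. q i * M i j) = (\<Sum>i<n. if i = n - 1 - j then q i * s j else 0)"
      using that by (intro sum.cong refl) (auto simp: M_def)
    then show ?thesis using that by (simp add: mult.commute)
  qed
  then show ?thesis unfolding eqv_def using g by blast
qed

lemma eqv_toeplitz:
  assumes Q: "sr Q" and w: "w \<in> Q" and mn: "m \<le> n"
  shows "eqv Q n E (\<lambda>p. if p < m then (\<Sum>a\<le>p. (- w) ^ (p - a) * E a) else E p)"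
proof -
  define A where "A = (\<lambda>i j. if j < m then (if i \<le> j then (- w) ^ (j - i) else 0) else (if i = j then 1 else 0))"
  define B where "B = (\<lambda>i j. (if i = j then 1 else 0) + (if Suc i = j \<and> j < m then w else 0))"
  have wQ: "- w \<in> Q" using sr_uminus[OF Q w] .
  have AB: "(\<Sum>k<n. A i k * B k l) = A i l + (if 0 < l \<and> l < m then A i (l - 1) * w else 0)"
    if "l < n" for i l
  proof -
    have "(\<Sum>k<n. A i k * B k l) = (\<Sum>k<n. (if k = l then A i k else 0) + (if k = l - 1 \<and> 0 < l \<and> l < m then A i k * w else 0))"
      unfolding B_def by (intro sum.cong refl) (auto simp: algebra_simps)
    also have "\<dots> = A i l + (if 0 < l \<and> l < m then A i (l - 1) * w else 0)"
      using that by (simp add: sum.distrib) linarith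
    finally show ?thesis .
  qed
  have BA: "(\<Sum>k<n. B i k * A k l) = A i l + (if Suc i < m then w * A (Suc i) l else 0)"
    if "i < n" for i l
  proof -
    have "(\<Sum>k<n. B i k * A k l) = (\<Sum>k<n. (if k = i then A k l else 0) + (if k = Suc i \<and> Suc i < m then w * A k l else 0))"
      unfolding B_def by (intro sum.cong refl) (auto simp: algebra_simps)
    also have "\<dots> = A i l + (if Suc i < m then w * A (Suc i) l else 0)"
      using that mn by (simp add: sum.distrib)
    finally show ?thesis .
  qed
  have pw: "(- w) ^ (l - i) + (- w) ^ (l - 1 - i) * w = 0" if "i < l" for i l
  proof -
    have "l - i = Suc (l - 1 - i)" using that by simp
    then show ?thesis by (simp add: algebra_simps)
  qed
  have pw2: "(- w) ^ (l - i) + w * (- w) ^ (l - Suc i) = 0" if "i < l" for i l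
    using pw[OF that] by (simp add: algebra_simps)
  have 1: "(\<Sum>k<n. A i k * B k l) = (if i = l then 1 else 0)" if "i < n" "l < n" for i l
    unfolding AB[OF that(2)] using pw[of i l] by (auto simp: A_def)
  have 2: "(\<Sum>k<n. B i k * A k l) = (if i = l then 1 else 0)" if "i < n" "l < n" for i l
    unfolding BA[OF that(1)] using pw2[of i l] by (auto simp: A_def)
  have g: "gl Q n A" unfolding gl_def
    apply (intro conjI exI[of _ B])
    using 1 2 by (auto simp: A_def B_def intro!: sr_power[OF Q wQ] sr_0[OF Q] sr_1[OF Q] sr_add[OF Q] w)
  have "(if p < m then (\<Sum>a\<le>p. (- w) ^ (p - a) * E a) else E p) = (\<Sum>i<n. E i * A i p)" if "p < n" for p
  proof (cases "p < m")
    case True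
    have "(\<Sum>i<n. E i * A i p) = (\<Sum>i\<in>{..p}. E i * (- w) ^ (p - i))"
      using True that by (intro sum.mono_neutral_cong_right) (auto simp: A_def)
    then show ?thesis using True by (simp add: mult.commute)
  next
    case False
    have "(\<Sum>i<n. E i * A i p) = (\<Sum>i<n. if i = p then E i else 0)"
      using False by (intro sum.cong refl) (auto simp: A_def)
    then show ?thesis using False that by simp
  qed
  then show ?thesis unfolding eqv_def using g by blast
qed

definition esym :: "(nat \<Rightarrow> 'a::comm_ring_1) \<Rightarrow> nat \<Rightarrow> nat \<Rightarrow> nat \<Rightarrow> 'a" where
  "esym z lo hi i = (\<Sum>S\<in>{S. S \<subseteq> {lo..<hi} \<and> card S = i}. \<Prod>j\<in>S. z j)"

lemma fin_subsets: "finite {S. S \<subseteq> {lo..<hi::nat} \<and> P S}"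
  by (rule finite_subset[of _ "Pow {lo..<hi}"]) auto

lemma esym_0 [simp]: "esym z lo hi 0 = 1"
proof -
  have e: "S = {}" if "S \<subseteq> {lo..<hi}" "card S = 0" for S
  proof -
    have "finite S" using finite_subset[OF that(1) finite_atLeastLessThan] .
    then show ?thesis using that(2) card_0_eq by blast
  qed
  have "{S. S \<subseteq> {lo..<hi} \<and> card S = 0} = {{}}"
  proof (intro equalityI subsetI)
    fix S assume "S \<in> {S. S \<subseteq> {lo..<hi} \<and> card S = 0}"
    then show "S \<in> {{}}" using e by simp
  qed simp
  then show ?thesis unfolding esym_def by simp
qed

lemma esym_big: assumes "hi - lo < i" shows "esym z lo hi i = 0"
proof -
  have "{S. S \<subseteq> {lo..<hi} \<and> card S = i} = {}"
  proof -
    have "card S \<le> hi - lo" if "S \<subseteq> {lo..<hi}" for S using card_mono[of "{lo..<hi}" S] that by auto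
    then have "\<not> (S \<subseteq> {lo..<hi} \<and> card S = i)" for S using assms by (metis not_le)
    then show ?thesis by blast
  qed
  then show ?thesis unfolding esym_def by (metis sum.empty)
qed

lemma esym_Suc: assumes "lo < hi"
  shows "esym z lo hi (Suc i) = esym z (Suc lo) hi (Suc i) + z lo * esym z (Suc lo) hi i"
proof -
  let ?A = "{S. S \<subseteq> {Suc lo..<hi} \<and> card S = Suc i}"
  let ?B = "{S. S \<subseteq> {Suc lo..<hi} \<and> card S = i}"
  have split: "{S. S \<subseteq> {lo..<hi} \<and> card S = Suc i} = ?A \<union> insert lo ` ?B"
  proof (intro equalityI subsetI)
    fix S assume "S \<in> {S. S \<subseteq> {lo..<hi} \<and> card S = Suc i}"
    then have S: "S \<subseteq> {lo..<hi}" "card S = Suc i" by auto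
    have fS: "finite S" using S(1) finite_subset by blast
    show "S \<in> ?A \<union> insert lo ` ?B"
    proof (cases "lo \<in> S")
      case True
      have "S - {lo} \<in> ?B" using S(1,2) fS True by auto
      moreover have "S = insert lo (S - {lo})" using True by auto
      ultimately show ?thesis by blast
    next
      case False
      then have "S \<subseteq> {Suc lo..<hi}" using S(1) by (auto simp: Suc_le_eq order.order_iff_strict)
      then show ?thesis using S(2) by blast
    qed
  next
    fix S assume "S \<in> ?A \<union> insert lo ` ?B"
    then show "S \<in> {S. S \<subseteq> {lo..<hi} \<and> card S = Suc i}"
    proof
      assume "S \<in> ?A" then show ?thesis by auto
    next
      assume "S \<in> insert lo ` ?B"
      then obtain T where T: "T \<subseteq> {Suc lo..<hi}" "card T = i" "S = insert lo T" by auto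
      then have "finite T" "lo \<notin> T" using finite_subset by auto
      then show ?thesis using T assms by auto
    qed
  qed
  have disj: "?A \<inter> insert lo ` ?B = {}" by auto
  have inj: "inj_on (insert lo) ?B"
    by (rule inj_onI) (metis (no_types, lifting) Diff_insert_absorb atLeastLessThan_iff
        mem_Collect_eq not_less_eq_eq order_refl subsetD)
  have "(\<Sum>S\<in>insert lo ` ?B. \<Prod>j\<in>S. z j) = (\<Sum>S\<in>?B. \<Prod>j\<in>insert lo S. z j)"
    by (rule sum.reindex[OF inj, unfolded comp_def])
  also have "\<dots> = (\<Sum>S\<in>?B. z lo * (\<Prod>j\<in>S. z j))"
  proof (rule sum.cong[OF refl])
    fix S assume "S \<in> ?B"
    then have "finite S" "lo \<notin> S" using finite_subset by auto
    then show "(\<Prod>j\<in>insert lo S. z j) = z lo * (\<Prod>j\<in>S. z j)" by simp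
  qed
  finally have "(\<Sum>S\<in>insert lo ` ?B. \<Prod>j\<in>S. z j) = z lo * esym z (Suc lo) hi i"
    by (simp add: esym_def sum_distrib_left)
  then show ?thesis unfolding esym_def split
    by (subst sum.union_disjoint) (auto simp: fin_subsets disj)
qed

lemma esym_all: "esym z lo hi (hi - lo) = (\<Prod>j\<in>{lo..<hi}. z j)"
proof -
  have "{S. S \<subseteq> {lo..<hi} \<and> card S = hi - lo} = {{lo..<hi}}"
  proof -
    have "S = {lo..<hi}" if "S \<subseteq> {lo..<hi}" "card S = hi - lo" for S
      using that by (intro card_subset_eq) auto
    then show ?thesis by auto
  qed
  then show ?thesis by (simp add: esym_def)
qed

lemma esym_peel: assumes "lo < hi"
  shows "(\<Sum>a\<le>j. (- z lo) ^ (j - a) * esym z lo hi a) = esym z (Suc lo) hi j"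
proof (induction j)
  case 0 then show ?case by simp
next
  case (Suc j)
  have "(\<Sum>a\<le>Suc j. (- z lo) ^ (Suc j - a) * esym z lo hi a)
      = (- z lo) * (\<Sum>a\<le>j. (- z lo) ^ (j - a) * esym z lo hi a) + esym z lo hi (Suc j)"
    by (simp add: sum_distrib_left Suc_diff_le mult.assoc)
  also have "\<dots> = esym z (Suc lo) hi (Suc j)"
    using Suc esym_Suc[OF assms, of z j] by (simp add: algebra_simps)
  finally show ?case .
qed

fun cc :: "(nat \<Rightarrow> 'a::comm_ring_1) \<Rightarrow> nat \<Rightarrow> (nat \<Rightarrow> 'a) \<Rightarrow> nat \<Rightarrow> nat \<Rightarrow> 'a" where
  "cc z lo c0 0 j = c0 j"
| "cc z lo c0 (Suc k) j = (\<Sum>a\<le>j. (- z (lo + k)) ^ (j - a) * cc z lo c0 k a)"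

lemma cc_0: "c0 0 = 1 \<Longrightarrow> cc z lo c0 k 0 = 1"
  by (induction k) auto

definition TT :: "(nat \<Rightarrow> 'a::comm_ring_1) \<Rightarrow> nat \<Rightarrow> nat \<Rightarrow> (nat \<Rightarrow> 'a) \<Rightarrow> nat \<Rightarrow> nat \<Rightarrow> nat \<Rightarrow> 'a" where
  "TT z lo hi c0 M k p = (let k' = min k (M - p) in esym z (lo + k') hi (Suc p) - cc z lo c0 k' (Suc p))"

lemma TT_step:
  assumes Q: "sr Q" and zQ: "z (lo + k) \<in> Q" and c00: "c0 0 = 1" and k: "k < M" "lo + k < hi"
  shows "eqv Q M (TT z lo hi c0 M k) (TT z lo hi c0 M (Suc k))"
proof -
  let ?w = "z (lo + k)"
  have e: "eqv Q M (TT z lo hi c0 M k) (\<lambda>p. if p < M - k then (\<Sum>a\<le>p. (- ?w) ^ (p - a) * TT z lo hi c0 M k a) else TT z lo hi c0 M k p)"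
    by (rule eqv_toeplitz[OF Q zQ]) simp
  show ?thesis
  proof (rule eqv_cong[OF e refl])
    fix p assume "p < M"
    show "(if p < M - k then (\<Sum>a\<le>p. (- ?w) ^ (p - a) * TT z lo hi c0 M k a) else TT z lo hi c0 M k p)
          = TT z lo hi c0 M (Suc k) p"
    proof (cases "p < M - k")
      case True
      define f where "f b = (- ?w) ^ (Suc p - b) * (esym z (lo + k) hi b - cc z lo c0 k b)" for b
      have "(\<Sum>a\<le>p. (- ?w) ^ (p - a) * TT z lo hi c0 M k a) = (\<Sum>a\<le>p. f (Suc a))"
        using True by (intro sum.cong refl) (auto simp: TT_def f_def Let_def min_def)
      also have "\<dots> = (\<Sum>b\<le>Suc p. f b)"
        by (subst sum.atMost_Suc_shift) (simp add: f_def cc_0[of c0, OF c00])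
      also have "\<dots> = esym z (lo + Suc k) hi (Suc p) - cc z lo c0 (Suc k) (Suc p)"
        unfolding f_def right_diff_distrib sum_subtractf
        using esym_peel[of "lo + k" hi z "Suc p"] k by simp
      also have "\<dots> = TT z lo hi c0 M (Suc k) p"
      proof -
        have "min (Suc k) (M - p) = Suc k" using True by simp
        then show ?thesis by (simp add: TT_def Let_def)
      qed
      finally show ?thesis using True by simp
    next
      case False
      then have "min (Suc k) (M - p) = M - p" "min k (M - p) = M - p" by auto
      then show ?thesis using False by (simp add: TT_def Let_def)
    qed
  qed
qed

lemma TT_iter:
  assumes Q: "sr Q" and zQ: "\<And>j. lo \<le> j \<Longrightarrow> j < hi \<Longrightarrow> z j \<in> Q" and c00: "c0 0 = 1"
    and M: "lo + M \<le> hi" and k: "k \<le> M"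
  shows "eqv Q M (TT z lo hi c0 M 0) (TT z lo hi c0 M k)"
  using k
proof (induction k)
  case 0 show ?case by (rule eqv_refl[OF Q])
next
  case (Suc k)
  have "eqv Q M (TT z lo hi c0 M k) (TT z lo hi c0 M (Suc k))"
  proof -
    have k1: "k < M" "lo + k < hi" using Suc.prems M by auto
    have "z (lo + k) \<in> Q" using k1 by (intro zQ) auto
    from TT_step[of Q z lo k c0 M hi, OF Q this c00 k1] show ?thesis .
  qed
  then show ?case using Suc eqv_trans[OF Q] by auto
qed

abbreviation XX :: "weight \<Rightarrow> (weight \<Rightarrow>\<^sub>0 'r::comm_ring_1)" where
  "XX v \<equiv> Poly_Mapping.single v 1"

definition supp_set :: "(nat \<times> nat) set \<Rightarrow> weight set" where
  "supp_set D = {v. \<forall>x. v x \<noteq> 0 \<longrightarrow> x \<in> D}"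

definition ind :: "nat \<times> nat \<Rightarrow> weight" where
  "ind x = (\<lambda>y. if y = x then 1 else 0)"

lemma sum_fun_app: "(sum f A) x = (\<Sum>a\<in>A. f a x)" for f :: "'b \<Rightarrow> 'c \<Rightarrow> 'd::comm_monoid_add"
  by (induction A rule: infinite_finite_induct) auto

lemma supp_set_iff: "u \<in> supp_set D \<longleftrightarrow> (\<forall>x. x \<notin> D \<longrightarrow> u x = 0)"
  unfolding supp_set_def by blast
lemma supp_set_0: "0 \<in> supp_set D" by (simp add: supp_set_def)
lemma supp_set_add: "u \<in> supp_set D \<Longrightarrow> v \<in> supp_set D \<Longrightarrow> u + v \<in> supp_set D"
  by (auto simp: supp_set_iff)
lemma supp_set_uminus: "u \<in> supp_set D \<Longrightarrow> - u \<in> supp_set D"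
  by (auto simp: supp_set_iff)
lemma supp_set_diff: "u \<in> supp_set D \<Longrightarrow> v \<in> supp_set D \<Longrightarrow> u - v \<in> supp_set D"
  by (auto simp: supp_set_iff)
lemma supp_set_mono: "D \<subseteq> D' \<Longrightarrow> supp_set D \<subseteq> supp_set D'"
  by (auto simp: supp_set_def)
lemma supp_set_sum: "(\<And>a. a \<in> A \<Longrightarrow> f a \<in> supp_set D) \<Longrightarrow> sum f A \<in> supp_set D"
  by (induction A rule: infinite_finite_induct) (auto intro: supp_set_0 supp_set_add)
lemma ind_supp: "x \<in> D \<Longrightarrow> ind x \<in> supp_set D"
  by (auto simp: supp_set_def ind_def)
lemma smult_supp: "v \<in> supp_set D \<Longrightarrow> (\<lambda>y. k * v y) \<in> supp_set D"
  by (auto simp: supp_set_iff)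

lemma sr_group_ring: "sr (group_ring (supp_set D) :: (weight \<Rightarrow>\<^sub>0 'r::comm_ring_1) set)"
proof -
  let ?G = "group_ring (supp_set D) :: (weight \<Rightarrow>\<^sub>0 'r::comm_ring_1) set"
  have 0: "0 \<in> ?G" by (simp add: group_ring_def)
  have 1: "1 \<in> ?G" by (simp add: group_ring_def supp_set_0)
  have add: "a + b \<in> ?G" if "a \<in> ?G" "b \<in> ?G" for a b
    using that keys_add[of a b] by (auto simp: group_ring_def)
  have um: "- a \<in> ?G" if "a \<in> ?G" for a
    using that by (auto simp: group_ring_def)
  have mu: "a * b \<in> ?G" if "a \<in> ?G" "b \<in> ?G" for a b
    using that keys_mult[of a b] by (auto simp: group_ring_def intro!: supp_set_add)
  show ?thesis unfolding sr_def using 0 1 add um mu by blast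
qed

lemma group_ring_mono: "A \<subseteq> B \<Longrightarrow> group_ring A \<subseteq> group_ring B"
  by (auto simp: group_ring_def)

lemma XX_in: "v \<in> S \<Longrightarrow> (XX v :: weight \<Rightarrow>\<^sub>0 'r::comm_ring_1) \<in> group_ring S"
  by (auto simp: group_ring_def)

lemma XX_add: "(XX (u + v) :: weight \<Rightarrow>\<^sub>0 'r::comm_ring_1) = XX u * XX v"
  by (simp add: mult_single)

lemma XX_0: "(XX 0 :: weight \<Rightarrow>\<^sub>0 'r::comm_ring_1) = 1"
  by simp

lemma XX_sum: "finite A \<Longrightarrow> (XX (\<Sum>a\<in>A. f a) :: weight \<Rightarrow>\<^sub>0 'r::comm_ring_1) = (\<Prod>a\<in>A. XX (f a))"
proof (induction A rule: finite_induct)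
  case empty then show ?case by (simp only: sum.empty prod.empty single_one)
next
  case (insert x F)
  show ?case by (simp only: sum.insert[OF insert(1,2)] prod.insert[OF insert(1,2)] XX_add insert(3))
qed

definition lowc :: "nat \<times> nat \<Rightarrow> int \<Rightarrow> (weight \<Rightarrow>\<^sub>0 'r::comm_ring_1) \<Rightarrow> bool" where
  "lowc pt a f \<longleftrightarrow> (\<forall>x\<in>Poly_Mapping.keys f. a \<le> x pt)"

lemma lowc_add: "lowc pt a f \<Longrightarrow> lowc pt a g \<Longrightarrow> lowc pt a (f + g)"
  unfolding lowc_def using keys_add[of f g] by auto
lemma lowc_uminus: "lowc pt a f \<Longrightarrow> lowc pt a (- f)"
  unfolding lowc_def by simp
lemma lowc_diff: "lowc pt a f \<Longrightarrow> lowc pt a g \<Longrightarrow> lowc pt a (f - g)"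
  unfolding lowc_def using keys_diff[of f g] by auto
lemma lowc_0: "lowc pt a 0" unfolding lowc_def by simp
lemma lowc_sum: "(\<And>i. i \<in> I \<Longrightarrow> lowc pt a (f i)) \<Longrightarrow> lowc pt a (sum f I)"
  by (induction I rule: infinite_finite_induct) (auto intro: lowc_0 lowc_add)
lemma lowc_mono: "a' \<le> a \<Longrightarrow> lowc pt a f \<Longrightarrow> lowc pt a' f"
  unfolding lowc_def by force
lemma lowc_mult: "lowc pt a f \<Longrightarrow> lowc pt b g \<Longrightarrow> lowc pt (a + b) (f * g)"
  unfolding lowc_def using keys_mult[of f g] by (fastforce intro: add_mono)
lemma lowc_XX: "lowc pt (v pt) (XX v)"
  unfolding lowc_def by simp
lemma lowc_power: "lowc pt a f \<Longrightarrow> lowc pt (int k * a) (f ^ k)"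
proof (induction k)
  case 0 then show ?case unfolding lowc_def by simp
next
  case (Suc k)
  have "lowc pt (a + int k * a) (f * f ^ k)" by (rule lowc_mult[OF Suc.prems Suc.IH[OF Suc.prems]])
  then show ?case by (simp add: algebra_simps)
qed
lemma lowc_of_nat: "lowc pt 0 (of_nat k :: weight \<Rightarrow>\<^sub>0 'r::comm_ring_1)"
proof -
  have "Poly_Mapping.keys (of_nat k :: weight \<Rightarrow>\<^sub>0 'r) \<subseteq> {0}"
    by (simp flip: single_of_nat)
  then show ?thesis unfolding lowc_def by auto
qed
lemma lowc_supp: "f \<in> group_ring (supp_set D) \<Longrightarrow> pt \<notin> D \<Longrightarrow> lowc pt 0 f"
proof -
  assume f: "f \<in> group_ring (supp_set D)" and pt: "pt \<notin> D"
  have "x pt = 0" if "x \<in> Poly_Mapping.keys f" for x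
  proof -
    have "x \<in> supp_set D" using f that unfolding group_ring_def by blast
    then show ?thesis using pt unfolding supp_set_iff by blast
  qed
  then show ?thesis unfolding lowc_def by (metis order_refl)
qed

definition divp :: "nat \<times> nat \<Rightarrow> weight set \<Rightarrow> (weight \<Rightarrow>\<^sub>0 'r::comm_ring_1) \<Rightarrow> bool" where
  "divp pt S F \<longleftrightarrow> (\<exists>\<nu>. \<nu> \<in> S \<and> Poly_Mapping.lookup F \<nu> = 1 \<and>
     (\<forall>x\<in>Poly_Mapping.keys F. \<nu> pt \<le> x pt \<and> (x pt = \<nu> pt \<longrightarrow> x = \<nu>)))"

lemma divp_intro:
  assumes "\<nu> \<in> S" "lowc pt (\<nu> pt + 1) R" "(1::'r::comm_ring_1) \<noteq> 0"
  shows "divp pt S (XX \<nu> + R :: weight \<Rightarrow>\<^sub>0 'r)"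
proof -
  have nR: "\<nu> \<notin> Poly_Mapping.keys R" using assms(2) unfolding lowc_def by force
  have "Poly_Mapping.lookup (XX \<nu> + R) \<nu> = 1"
    using nR by (simp add: lookup_add in_keys_iff)
  moreover have "\<forall>x\<in>Poly_Mapping.keys (XX \<nu> + R). \<nu> pt \<le> x pt \<and> (x pt = \<nu> pt \<longrightarrow> x = \<nu>)"
  proof
    fix x assume "x \<in> Poly_Mapping.keys (XX \<nu> + R :: weight \<Rightarrow>\<^sub>0 'r)"
    then have "x = \<nu> \<or> x \<in> Poly_Mapping.keys R" using keys_add[of "XX \<nu>" R] assms(3) by auto
    then show "\<nu> pt \<le> x pt \<and> (x pt = \<nu> pt \<longrightarrow> x = \<nu>)"
      using assms(2) unfolding lowc_def by force
  qed
  ultimately show ?thesis unfolding divp_def using assms(1) by blast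
qed

lemma comp_generic:
  assumes Q: "sr Q" and zQ: "\<And>j. 1 \<le> j \<Longrightarrow> j < hi \<Longrightarrow> z j \<in> Q" and c00: "c0 0 = 1"
    and M: "1 + r \<le> hi" and s: "\<And>p. p < r \<Longrightarrow> s p \<in> Q" "\<And>p. p < r \<Longrightarrow> s p * s p = 1"
  shows "eqv Q r (\<lambda>p. esym z 1 hi (Suc p) - c0 (Suc p))
     (\<lambda>p. s p * (esym z (p + 2) hi (r - p) - cc z 1 c0 (Suc p) (r - p)))"
proof -
  have e1: "eqv Q r (TT z 1 hi c0 r 0) (TT z 1 hi c0 r r)"
    by (rule TT_iter[of Q 1 hi z c0 r r, OF Q zQ c00 M]) auto
  have e2: "eqv Q r (TT z 1 hi c0 r r) (\<lambda>j. s j * TT z 1 hi c0 r r (r - 1 - j))"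
    by (rule eqv_rev[OF Q s])
  have e: "eqv Q r (TT z 1 hi c0 r 0) (\<lambda>j. s j * TT z 1 hi c0 r r (r - 1 - j))"
    by (rule eqv_trans[OF Q e1 e2])
  show ?thesis
  proof (rule eqv_cong[OF e])
    fix p assume "p < r"
    show "TT z 1 hi c0 r 0 p = esym z 1 hi (Suc p) - c0 (Suc p)"
      by (simp add: TT_def)
    have "min r (r - (r - 1 - p)) = Suc p" "Suc (r - 1 - p) = r - p" using \<open>p < r\<close> by auto
    then show "s p * TT z 1 hi c0 r r (r - 1 - p) = s p * (esym z (p + 2) hi (r - p) - cc z 1 c0 (Suc p) (r - p))"
      by (simp add: TT_def Let_def)
  qed
qed

definition Dc :: "nat \<Rightarrow> nat \<Rightarrow> (nat \<times> nat) set" where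
  "Dc c j = {(c, j') | j'. 1 \<le> j' \<and> j' \<le> j}"

lemma Dc_mono: "j \<le> j' \<Longrightarrow> Dc c j \<subseteq> Dc c j'"
  by (auto simp: Dc_def)

lemma cc_supp:
  assumes zD: "\<And>j. 1 \<le> j \<Longrightarrow> z j \<in> group_ring (supp_set (Dc c j))"
    and c0: "\<And>j. c0 j \<in> group_ring (supp_set {})"
  shows "cc z 1 c0 k a \<in> group_ring (supp_set (Dc c k))"
proof (induction k arbitrary: a)
  case 0
  then show ?case using c0[of a] group_ring_mono[OF supp_set_mono[of "{}" "Dc c 0"]] by auto
next
  case (Suc k)
  have Q: "sr (group_ring (supp_set (Dc c (Suc k))) :: (weight \<Rightarrow>\<^sub>0 'a) set)" by (rule sr_group_ring)
  have z: "z (1 + k) \<in> group_ring (supp_set (Dc c (Suc k)))" using zD[of "1 + k"] by simp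
  have "cc z 1 c0 k b \<in> group_ring (supp_set (Dc c (Suc k)))" for b
    using Suc.IH[of b] group_ring_mono[OF supp_set_mono[OF Dc_mono[of k "Suc k" c]]] by auto
  then show ?case
    by (simp only: cc.simps) (intro sr_sum[OF Q] sr_mult[OF Q] sr_power[OF Q] sr_uminus[OF Q] z)
qed

lemma ind_apply: "ind x y = (if y = x then 1 else 0)" by (simp add: ind_def)

lemma XX_ind_Dc: "1 \<le> j \<Longrightarrow> (XX (ind (c, j)) :: weight \<Rightarrow>\<^sub>0 'r::comm_ring_1) \<in> group_ring (supp_set (Dc c j))"
  by (intro XX_in ind_supp) (auto simp: Dc_def)
lemma XX_mind_Dc: "1 \<le> j \<Longrightarrow> (XX (- ind (c, j)) :: weight \<Rightarrow>\<^sub>0 'r::comm_ring_1) \<in> group_ring (supp_set (Dc c j))"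
  by (intro XX_in supp_set_uminus ind_supp) (auto simp: Dc_def)

lemma lowc_pm1: "lowc pt 0 (((- 1) ^ m) :: weight \<Rightarrow>\<^sub>0 'r::comm_ring_1)"
proof -
  have Q: "sr (group_ring (supp_set {}) :: (weight \<Rightarrow>\<^sub>0 'r) set)" by (rule sr_group_ring)
  have "((- 1) ^ m :: weight \<Rightarrow>\<^sub>0 'r) \<in> group_ring (supp_set {})"
    by (intro sr_power[OF Q] sr_uminus[OF Q] sr_1[OF Q])
  then show ?thesis by (rule lowc_supp) simp
qed

lemma ypow:
  fixes u :: weight
  assumes "u pt = 1"
  shows "\<exists>R. ((XX u + XX (- u)) ^ m :: weight \<Rightarrow>\<^sub>0 'r::comm_ring_1) = XX (zsmult (- int m) u) + R
     \<and> lowc pt (1 - int m) R"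
proof (induction m)
  case 0
  have e: "zsmult (- int 0) u = 0" by (simp add: zsmult_def fun_eq_iff)
  show ?case
  proof (intro exI[of _ 0] conjI)
    show "((XX u + XX (- u)) ^ 0 :: weight \<Rightarrow>\<^sub>0 'r) = XX (zsmult (- int 0) u) + 0"
      by (simp only: e power_0 single_one add_0_right)
  qed (rule lowc_0)
next
  case (Suc m)
  then obtain R where R: "((XX u + XX (- u)) ^ m :: weight \<Rightarrow>\<^sub>0 'r) = XX (zsmult (- int m) u) + R"
    "lowc pt (1 - int m) R" by blast
  let ?y = "(XX u + XX (- u)) :: weight \<Rightarrow>\<^sub>0 'r"
  have ly: "lowc pt (- 1) ?y"
    using lowc_XX[of pt u] lowc_XX[of pt "- u"] assms
    by (intro lowc_add) (auto intro: lowc_mono[of "-1" 1])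
  have "?y ^ Suc m = ?y * (XX (zsmult (- int m) u) + R)" using R(1) by simp
  also have "\<dots> = XX u * XX (zsmult (- int m) u) + (XX (- u) * XX (zsmult (- int m) u) + ?y * R)"
    by (simp only: distrib_right distrib_left add.assoc)
  also have "\<dots> = XX (u + zsmult (- int m) u) + (XX (- u + zsmult (- int m) u) + ?y * R)"
    by (simp only: XX_add)
  also have "\<dots> = XX (- u + zsmult (- int m) u) + (XX (u + zsmult (- int m) u) + ?y * R)"
    by (simp only: add.left_commute)
  finally have eq0: "?y ^ Suc m = XX (- u + zsmult (- int m) u) + (XX (u + zsmult (- int m) u) + ?y * R)" .
  have eq2: "- u + zsmult (- int m) u = zsmult (- int (Suc m)) u"
    by (simp add: zsmult_def fun_eq_iff algebra_simps)
  have eq: "?y ^ Suc m = XX (zsmult (- int (Suc m)) u) + (XX (u + zsmult (- int m) u) + ?y * R)"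
    using eq0 by (simp only: eq2)
  have "lowc pt (1 - int (Suc m)) (XX (u + zsmult (- int m) u) :: weight \<Rightarrow>\<^sub>0 'r)"
    using lowc_XX[of pt "u + zsmult (- int m) u"] assms
    by (rule_tac lowc_mono[rotated]) (auto simp: zsmult_def)
  moreover have "lowc pt (1 - int (Suc m)) (?y * R)"
    using lowc_mult[OF ly R(2)] by simp
  ultimately show ?case using eq
    by (intro exI[of _ "XX (u + zsmult (- int m) u) + ?y * R"] conjI lowc_add) (simp_all only:)
qed

lemma compC:
  fixes c r :: nat and c0 :: "nat \<Rightarrow> weight \<Rightarrow>\<^sub>0 'r::comm_ring_1"
  assumes r: "1 \<le> r" and c00: "c0 0 = 1" and c0: "\<And>j. c0 j \<in> group_ring (supp_set {})"
    and W: "\<And>j. 1 \<le> j \<Longrightarrow> j \<le> r \<Longrightarrow> (c, j) \<in> Wd" and one: "(1::'r) \<noteq> 0"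
  shows "\<exists>F. eqv (group_ring (supp_set Wd)) r
      (\<lambda>p. esym (\<lambda>j. XX (ind (c, j)) + XX (- ind (c, j))) 1 (r + 1) (Suc p) - c0 (Suc p)) F \<and>
      (\<forall>p<r. F p \<in> group_ring (supp_set (Dc c (Suc p))) \<and> divp (c, Suc p) (supp_set (Dc c (Suc p))) (F p))"
proof -
  define z where "z = (\<lambda>j. XX (ind (c, j)) + XX (- ind (c, j)) :: weight \<Rightarrow>\<^sub>0 'r)"
  define s where "s = (\<lambda>p. - ((- 1) ^ (r - p)) :: weight \<Rightarrow>\<^sub>0 'r)"
  let ?Q = "group_ring (supp_set Wd) :: (weight \<Rightarrow>\<^sub>0 'r) set"
  have Q: "sr ?Q" by (rule sr_group_ring)
  have pm: "((- 1) ^ m * (- 1) ^ m :: weight \<Rightarrow>\<^sub>0 'r) = 1" for m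
    by (simp add: power_mult_distrib[symmetric])
  have zQ: "z j \<in> ?Q" if "1 \<le> j" "j < r + 1" for j
    unfolding z_def using that W[of j]
    by (intro sr_add[OF Q] XX_in supp_set_uminus ind_supp) auto
  have sQ: "s p \<in> ?Q" "s p * s p = 1" for p
    unfolding s_def using pm[of "r - p"] by (auto intro!: sr_uminus[OF Q] sr_power[OF Q] sr_1[OF Q])
  have e: "eqv ?Q r (\<lambda>p. esym z 1 (r + 1) (Suc p) - c0 (Suc p))
     (\<lambda>p. s p * (esym z (p + 2) (r + 1) (r - p) - cc z 1 c0 (Suc p) (r - p)))"
    by (rule comp_generic[of ?Q "r + 1" z c0 r s, OF Q zQ c00 _ sQ]) auto
  have zD: "z j \<in> group_ring (supp_set (Dc c j))" if "1 \<le> j" for j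
    unfolding z_def using that
    by (intro sr_add[OF sr_group_ring] XX_ind_Dc XX_mind_Dc)
  have props: "s p * (esym z (p + 2) (r + 1) (r - p) - cc z 1 c0 (Suc p) (r - p)) \<in> group_ring (supp_set (Dc c (Suc p)))
     \<and> divp (c, Suc p) (supp_set (Dc c (Suc p))) (s p * (esym z (p + 2) (r + 1) (r - p) - cc z 1 c0 (Suc p) (r - p)))"
    if p: "p < r" for p
  proof -
    define m where "m = r - p"
    have m1: "1 \<le> m" using p by (simp add: m_def)
    let ?pt = "(c, Suc p)"
    let ?u = "ind ?pt"
    let ?G = "group_ring (supp_set (Dc c (Suc p))) :: (weight \<Rightarrow>\<^sub>0 'r) set"
    have G: "sr ?G" by (rule sr_group_ring)
    have es: "esym z (p + 2) (r + 1) (r - p) = 0" using p by (intro esym_big) simp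
    have y: "z (1 + p) = XX ?u + XX (- ?u)" by (simp add: z_def)
    have u1: "?u ?pt = 1" by (simp add: ind_def)
    obtain R where R: "((XX ?u + XX (- ?u)) ^ m :: weight \<Rightarrow>\<^sub>0 'r) = XX (zsmult (- int m) ?u) + R"
      "lowc ?pt (1 - int m) R"
      using ypow[of ?u ?pt, OF u1, of m] by blast
    define B where "B = (\<Sum>a<m. (- z (1 + p)) ^ (m - Suc a) * cc z 1 c0 p (Suc a))"
    have ccm: "cc z 1 c0 (Suc p) m = (- 1) ^ m * (XX (zsmult (- int m) ?u) + R) + B"
    proof -
      have "cc z 1 c0 (Suc p) m = (\<Sum>a\<le>m. (- z (1 + p)) ^ (m - a) * cc z 1 c0 p a)" by (simp only: cc.simps)
      also have "\<dots> = (- z (1 + p)) ^ m * cc z 1 c0 p 0 + B"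
        unfolding B_def by (simp only: sum.atMost_shift diff_zero)
      also have "\<dots> = (- 1) ^ m * (XX (zsmult (- int m) ?u) + R) + B"
      proof -
        have "(- z (1 + p)) ^ m = (- 1) ^ m * (XX ?u + XX (- ?u)) ^ m"
          unfolding y by (rule power_minus)
        then show ?thesis using R(1) by (simp only: cc_0[of c0, OF c00] mult_1_right)
      qed
      finally show ?thesis .
    qed
    define R' where "R' = (- 1) ^ m * ((- 1) ^ m * R + B)"
    have Fe: "s p * (esym z (p + 2) (r + 1) (r - p) - cc z 1 c0 (Suc p) (r - p)) = XX (zsmult (- int m) ?u) + R'"
    proof -
      have "s p * (esym z (p + 2) (r + 1) (r - p) - cc z 1 c0 (Suc p) (r - p)) =
          (- 1) ^ m * ((- 1) ^ m * (XX (zsmult (- int m) ?u) + R) + B)"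
      proof -
        have sp: "s p = - ((- 1) ^ m)" by (simp add: s_def m_def)
        have es': "esym z (p + 2) (r + 1) m = 0" using es by (simp add: m_def)
        show ?thesis unfolding m_def[symmetric] es' ccm sp by (simp add: algebra_simps)
      qed
      also have "\<dots> = ((- 1) ^ m * (- 1) ^ m) * XX (zsmult (- int m) ?u) + R'"
        unfolding R'_def by (simp add: algebra_simps)
      finally show ?thesis using pm[of m] by simp
    qed
    have ly: "lowc ?pt (- 1) (- z (1 + p))"
      unfolding y using lowc_XX[of ?pt ?u] lowc_XX[of ?pt "- ?u"]
      by (intro lowc_uminus lowc_add) (auto intro: lowc_mono[of "-1" 1] simp: ind_def)
    have ccp: "cc z 1 c0 p a \<in> group_ring (supp_set (Dc c p))" for a
      by (rule cc_supp[OF zD c0])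
    have lB: "lowc ?pt (1 - int m) B"
      unfolding B_def
    proof (rule lowc_sum)
      fix a assume "a \<in> {..<m}"
      then have a: "a < m" by simp
      have "lowc ?pt (int (m - Suc a) * (- 1) + 0) ((- z (1 + p)) ^ (m - Suc a) * cc z 1 c0 p (Suc a))"
        by (intro lowc_mult lowc_power ly lowc_supp[OF ccp]) (simp add: Dc_def)
      then show "lowc ?pt (1 - int m) ((- z (1 + p)) ^ (m - Suc a) * cc z 1 c0 p (Suc a))"
        by (rule lowc_mono[rotated]) (use a in simp)
    qed
    have lR': "lowc ?pt (1 - int m) R'"
    proof -
      have "lowc ?pt (0 + (1 - int m)) R'"
        unfolding R'_def
        by (intro lowc_mult lowc_pm1 lowc_add R(2) lB) (use lowc_mult[OF lowc_pm1 R(2)] in simp)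
      then show ?thesis by simp
    qed
    have nu: "zsmult (- int m) ?u \<in> supp_set (Dc c (Suc p))"
      unfolding zsmult_def by (intro smult_supp ind_supp) (auto simp: Dc_def)
    have "divp ?pt (supp_set (Dc c (Suc p))) (XX (zsmult (- int m) ?u) + R')"
      by (rule divp_intro[OF nu _ one]) (use lR' in \<open>simp add: zsmult_def ind_def\<close>)
    moreover have "s p * (esym z (p + 2) (r + 1) (r - p) - cc z 1 c0 (Suc p) (r - p)) \<in> ?G"
      unfolding es using sr_group_ring[of "{}"] cc_supp[OF zD c0, where k="Suc p" and a="r - p"]
      unfolding s_def
      by (intro sr_mult[OF G] sr_diff[OF G] sr_uminus[OF G] sr_power[OF G] sr_1[OF G] sr_0[OF G])
    ultimately show ?thesis using Fe by simp
  qed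
  show ?thesis unfolding z_def[symmetric] using e props by blast
qed

definition ebar :: "nat \<Rightarrow> nat \<Rightarrow> nat \<Rightarrow> weight" where
  "ebar c r j = (\<lambda>(c', k). if c' = c \<and> 1 \<le> k \<and> k \<le> r then (if k = j then 1 else 0) - (if j = r + 1 then 1 else 0) else 0)"

lemma ebar_Dc: "1 \<le> j \<Longrightarrow> ebar c r j \<in> supp_set (Dc c j)"
  unfolding supp_set_iff ebar_def Dc_def by auto

lemma ebar_W: "(\<And>j. 1 \<le> j \<Longrightarrow> j \<le> r \<Longrightarrow> (c, j) \<in> Wd) \<Longrightarrow> ebar c r j \<in> supp_set Wd"
  unfolding supp_set_iff ebar_def by auto

lemma ebar_ind: "1 \<le> j \<Longrightarrow> j \<le> r \<Longrightarrow> ebar c r j = ind (c, j)"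
  unfolding ebar_def ind_def by (auto simp: fun_eq_iff)

lemma ebar_tail:
  assumes "p < r"
  shows "(\<Sum>j\<in>{p + 2..<r + 2}. ebar c r j) = (\<lambda>(c', k). if c' = c \<and> 1 \<le> k \<and> k \<le> Suc p then - 1 else 0)"
proof (rule ext)
  fix x :: "nat \<times> nat"
  obtain c' k where x: "x = (c', k)" by (cases x)
  have "(\<Sum>j\<in>{p + 2..<r + 2}. ebar c r j) (c', k) = (\<Sum>j\<in>{p + 2..<r + 2}. ebar c r j (c', k))"
    by (rule sum_fun_app)
  also have "\<dots> = (if c' = c \<and> 1 \<le> k \<and> k \<le> Suc p then - 1 else 0)"
  proof (cases "c' = c \<and> 1 \<le> k \<and> k \<le> r")
    case True
    have "(\<Sum>j\<in>{p + 2..<r + 2}. ebar c r j (c', k)) =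
      (\<Sum>j\<in>{p + 2..<r + 2}. (if k = j then 1 else 0)) - (\<Sum>j\<in>{p + 2..<r + 2}. (if j = r + 1 then 1 else 0))"
      using True by (simp add: ebar_def sum_subtractf)
    also have "\<dots> = (if k \<in> {p + 2..<r + 2} then 1 else 0) - 1"
      using assms by simp
    finally show ?thesis using True by auto
  next
    case False
    then show ?thesis using assms by (auto simp: ebar_def)
  qed
  finally show "(\<Sum>j\<in>{p + 2..<r + 2}. ebar c r j) x = (\<lambda>(c', k). if c' = c \<and> 1 \<le> k \<and> k \<le> Suc p then - 1 else 0) x"
    unfolding x by simp
qed

lemma compA:
  fixes c r :: nat and c0 :: "nat \<Rightarrow> weight \<Rightarrow>\<^sub>0 'r::comm_ring_1"
  assumes r: "1 \<le> r" and c00: "c0 0 = 1" and c0: "\<And>j. c0 j \<in> group_ring (supp_set {})"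
    and W: "\<And>j. 1 \<le> j \<Longrightarrow> j \<le> r \<Longrightarrow> (c, j) \<in> Wd" and one: "(1::'r) \<noteq> 0"
  shows "\<exists>F. eqv (group_ring (supp_set Wd)) r
      (\<lambda>p. esym (\<lambda>j. XX (ebar c r j)) 1 (r + 2) (Suc p) - c0 (Suc p)) F \<and>
      (\<forall>p<r. F p \<in> group_ring (supp_set (Dc c (Suc p))) \<and> divp (c, Suc p) (supp_set (Dc c (Suc p))) (F p))"
proof -
  define z where "z = (\<lambda>j. XX (ebar c r j) :: weight \<Rightarrow>\<^sub>0 'r)"
  define s where "s = (\<lambda>p::nat. 1 :: weight \<Rightarrow>\<^sub>0 'r)"
  let ?Q = "group_ring (supp_set Wd) :: (weight \<Rightarrow>\<^sub>0 'r) set"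
  have Q: "sr ?Q" by (rule sr_group_ring)
  have zQ: "z j \<in> ?Q" if "1 \<le> j" "j < r + 2" for j
    unfolding z_def using W by (intro XX_in ebar_W) auto
  have sQ: "s p \<in> ?Q" "s p * s p = 1" for p :: nat
    unfolding s_def by (auto intro!: sr_1[OF Q])
  have e: "eqv ?Q r (\<lambda>p. esym z 1 (r + 2) (Suc p) - c0 (Suc p))
     (\<lambda>p. s p * (esym z (p + 2) (r + 2) (r - p) - cc z 1 c0 (Suc p) (r - p)))"
    by (rule comp_generic[of ?Q "r + 2" z c0 r s, OF Q zQ c00 _ sQ]) auto
  have zD: "z j \<in> group_ring (supp_set (Dc c j))" if "1 \<le> j" for j
    unfolding z_def using that by (intro XX_in ebar_Dc)
  have props: "s p * (esym z (p + 2) (r + 2) (r - p) - cc z 1 c0 (Suc p) (r - p)) \<in> group_ring (supp_set (Dc c (Suc p)))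
     \<and> divp (c, Suc p) (supp_set (Dc c (Suc p))) (s p * (esym z (p + 2) (r + 2) (r - p) - cc z 1 c0 (Suc p) (r - p)))"
    if p: "p < r" for p
  proof -
    define m where "m = r - p"
    let ?pt = "(c, Suc p)"
    define \<nu> where "\<nu> = (\<lambda>(c', k). if c' = c \<and> 1 \<le> k \<and> k \<le> Suc p then - 1 else 0 :: int)"
    let ?G = "group_ring (supp_set (Dc c (Suc p))) :: (weight \<Rightarrow>\<^sub>0 'r) set"
    have G: "sr ?G" by (rule sr_group_ring)
    have es: "esym z (p + 2) (r + 2) (r - p) = XX \<nu>"
    proof -
      have "esym z (p + 2) (r + 2) (r - p) = esym z (p + 2) (r + 2) ((r + 2) - (p + 2))" by simp
      also have "\<dots> = (\<Prod>j\<in>{p + 2..<r + 2}. z j)" by (rule esym_all)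
      also have "\<dots> = XX (\<Sum>j\<in>{p + 2..<r + 2}. ebar c r j)" unfolding z_def by (rule XX_sum[symmetric]) simp
      also have "\<dots> = XX \<nu>" unfolding \<nu>_def ebar_tail[OF p] ..
      finally show ?thesis .
    qed
    have y: "z (1 + p) = XX (ind ?pt)" unfolding z_def using p by (simp add: ebar_ind)
    have ly: "lowc ?pt 0 (- z (1 + p))"
      unfolding y using lowc_XX[of ?pt "ind ?pt"]
      by (intro lowc_uminus) (auto intro: lowc_mono[of 0 1] simp: ind_def)
    have ccp: "cc z 1 c0 p a \<in> group_ring (supp_set (Dc c p))" for a
      by (rule cc_supp[OF zD c0])
    have lcc: "lowc ?pt 0 (cc z 1 c0 (Suc p) m)"
    proof -
      have "cc z 1 c0 (Suc p) m = (\<Sum>a\<le>m. (- z (1 + p)) ^ (m - a) * cc z 1 c0 p a)" by (simp only: cc.simps)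
      moreover have "lowc ?pt 0 (\<Sum>a\<le>m. (- z (1 + p)) ^ (m - a) * cc z 1 c0 p a)"
      proof (rule lowc_sum)
        fix a
        have "lowc ?pt (int (m - a) * 0 + 0) ((- z (1 + p)) ^ (m - a) * cc z 1 c0 p a)"
          by (intro lowc_mult lowc_power ly lowc_supp[OF ccp]) (simp add: Dc_def)
        then show "lowc ?pt 0 ((- z (1 + p)) ^ (m - a) * cc z 1 c0 p a)" by simp
      qed
      ultimately show ?thesis by simp
    qed
    have Fe: "s p * (esym z (p + 2) (r + 2) (r - p) - cc z 1 c0 (Suc p) (r - p)) = XX \<nu> + (- cc z 1 c0 (Suc p) m)"
      unfolding es s_def m_def by simp
    have nu: "\<nu> \<in> supp_set (Dc c (Suc p))"
      unfolding supp_set_iff \<nu>_def Dc_def by auto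
    have "divp ?pt (supp_set (Dc c (Suc p))) (XX \<nu> + (- cc z 1 c0 (Suc p) m))"
      by (rule divp_intro[OF nu _ one]) (use lowc_uminus[OF lcc] in \<open>simp add: \<nu>_def\<close>)
    moreover have "XX \<nu> + (- cc z 1 c0 (Suc p) m) \<in> ?G"
      using cc_supp[OF zD c0, where k="Suc p" and a="m"]
      by (intro sr_add[OF G] sr_uminus[OF G] XX_in nu)
    ultimately show ?thesis using Fe by simp
  qed
  show ?thesis unfolding z_def[symmetric] using e props by blast
qed

lemma weyl_group_iff: "w \<in> weyl_group comps \<longleftrightarrow> (\<forall>c < length comps.
      fst w c permutes {1..n_coords (comps ! c)} \<and> (\<forall>j. snd w c j \<in> {1, -1}) \<and>
      (fst (comps ! c) = TypeA \<longrightarrow> (\<forall>j. snd w c j = 1)))"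
  by (cases w) (simp add: weyl_group_def)

lemma fund_weight_apply: "fund_weight c i (c', j) = (if c' = c \<and> 1 \<le> j \<and> j \<le> i then 1 else 0)"
  by (simp add: fund_weight_def)

definition OA :: "nat \<Rightarrow> nat \<Rightarrow> nat set \<Rightarrow> weight" where
  "OA c r S = (\<Sum>j\<in>S. ebar c r j)"

definition OC :: "nat \<Rightarrow> nat set \<times> nat set \<Rightarrow> weight" where
  "OC c ST = (\<Sum>j\<in>snd ST. ind (c, j)) + (\<Sum>j\<in>fst ST - snd ST. - ind (c, j))"

lemma OA_apply: "finite S \<Longrightarrow> OA c r S (c', k) =
    (if c' = c \<and> 1 \<le> k \<and> k \<le> r then (if k \<in> S then 1 else 0) - (if r + 1 \<in> S then 1 else 0) else 0)"
proof -
  assume S: "finite S"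
  have "OA c r S (c', k) = (\<Sum>j\<in>S. ebar c r j (c', k))" unfolding OA_def by (rule sum_fun_app)
  also have "\<dots> = (if c' = c \<and> 1 \<le> k \<and> k \<le> r then (\<Sum>j\<in>S. (if k = j then 1 else 0)) - (\<Sum>j\<in>S. (if j = r + 1 then 1 else 0)) else 0)"
  proof (cases "c' = c \<and> 1 \<le> k \<and> k \<le> r")
    case True then show ?thesis by (simp add: ebar_def sum_subtractf)
  next
    case False
    then have "ebar c r j (c', k) = 0" for j by (auto simp: ebar_def)
    then show ?thesis using False by auto
  qed
  also have "\<dots> = (if c' = c \<and> 1 \<le> k \<and> k \<le> r then (if k \<in> S then 1 else 0) - (if r + 1 \<in> S then 1 else 0) else 0)"
    using S by simp
  finally show ?thesis .
qed

lemma OC_apply: "finite S \<Longrightarrow> T \<subseteq> S \<Longrightarrow> OC c (S, T) (c', k) =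
    (if c' = c \<and> k \<in> S then (if k \<in> T then 1 else - 1) else 0)"
proof -
  assume S: "finite S" and T: "T \<subseteq> S"
  have fT: "finite T" using S T finite_subset by blast
  have "OC c (S, T) (c', k) = (\<Sum>j\<in>T. ind (c, j) (c', k)) + (\<Sum>j\<in>S - T. - ind (c, j) (c', k))"
    unfolding OC_def by (simp add: sum_fun_app)
  also have "\<dots> = (\<Sum>j\<in>T. if j = k then (if c' = c then 1 else 0) else 0) + (\<Sum>j\<in>S - T. if j = k then (if c' = c then - 1 else 0) else 0)"
    by (intro arg_cong2[where f="(+)"] sum.cong refl) (auto simp: ind_def)
  also have "\<dots> = (if c' = c \<and> k \<in> S then (if k \<in> T then 1 else - 1) else 0)"
    using S fT T by (auto simp: sum.delta)
  finally show ?thesis .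
qed

lemma inv_mem_image:
  assumes "\<sigma> permutes A" shows "inv \<sigma> k \<in> B \<longleftrightarrow> k \<in> \<sigma> ` B"
proof
  assume "inv \<sigma> k \<in> B" then show "k \<in> \<sigma> ` B"
    using permutes_inverses(1)[OF assms, of k] by (metis image_eqI)
next
  assume "k \<in> \<sigma> ` B" then show "inv \<sigma> k \<in> B"
    using permutes_inverses(2)[OF assms] by auto
qed

lemma perm_image_card:
  assumes "\<sigma> permutes A" "finite B" shows "card (\<sigma> ` B) = card B"
  using assms card_image permutes_inj inj_on_subset by (metis subset_UNIV)

lemma wact_A:
  assumes c: "c < length comps" and t: "comps ! c = (TypeA, r)" and w: "w \<in> weyl_group comps" and i: "i \<le> r"
  shows "weyl_act comps w (fund_weight c i) = OA c r (fst w c ` {1..i})"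
proof (rule ext)
  fix x :: "nat \<times> nat"
  obtain c' k where x: "x = (c', k)" by (cases x)
  let ?\<sigma> = "fst w c"
  have p: "?\<sigma> permutes {1..r + 1}" using w c t by (auto simp: weyl_group_iff n_coords_def)
  have pr: "inv ?\<sigma> j \<in> {1..r+1}" if "j \<in> {1..r+1}" for j
    using permutes_in_image[OF permutes_inv[OF p]] that by blast
  have key: "(1 \<le> inv ?\<sigma> j \<and> inv ?\<sigma> j \<le> i) \<longleftrightarrow> j \<in> ?\<sigma> ` {1..i}" if "j \<in> {1..r+1}" for j
    using inv_mem_image[OF p, of j "{1..i}"] by auto
  show "weyl_act comps w (fund_weight c i) x = OA c r (?\<sigma> ` {1..i}) x"
  proof (cases "c' = c \<and> 1 \<le> k \<and> k \<le> r")
    case True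
    then show ?thesis unfolding x weyl_act_def using c t key[of k] key[of "r+1"]
      by (simp add: OA_apply fund_weight_apply)
  next
    case False
    then show ?thesis unfolding x weyl_act_def using c t
      by (cases "c' < length comps"; cases "fst (comps ! c')") (auto simp: OA_apply fund_weight_apply)
  qed
qed

lemma wact_C:
  assumes c: "c < length comps" and t: "comps ! c = (TypeC, r)" and w: "w \<in> weyl_group comps" and i: "i \<le> r"
  shows "weyl_act comps w (fund_weight c i) =
    OC c (fst w c ` {1..i}, {k \<in> fst w c ` {1..i}. snd w c (inv (fst w c) k) = 1})"
proof (rule ext)
  fix x :: "nat \<times> nat"
  obtain c' k where x: "x = (c', k)" by (cases x)
  let ?\<sigma> = "fst w c"
  let ?S = "?\<sigma> ` {1..i}"
  have p: "?\<sigma> permutes {1..r}" using w c t by (auto simp: weyl_group_iff n_coords_def)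
  have eps: "snd w c j \<in> {1, -1}" for j using w c by (auto simp: weyl_group_iff)
  have Ssub: "?S \<subseteq> {1..r}" using permutes_image[OF p] i by auto
  have key: "(1 \<le> inv ?\<sigma> j \<and> inv ?\<sigma> j \<le> i) \<longleftrightarrow> j \<in> ?S" for j
    using inv_mem_image[OF p, of j "{1..i}"] by auto
  show "weyl_act comps w (fund_weight c i) x = OC c (?S, {k \<in> ?S. snd w c (inv ?\<sigma> k) = 1}) x"
  proof (cases "c' = c \<and> 1 \<le> k \<and> k \<le> r")
    case True
    have "weyl_act comps w (fund_weight c i) x = (if k \<in> ?S then snd w c (inv ?\<sigma> k) else 0)"
      unfolding x weyl_act_def using c t True key[of k] by (simp add: fund_weight_apply)
    also have "\<dots> = OC c (?S, {k \<in> ?S. snd w c (inv ?\<sigma> k) = 1}) x"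
      unfolding x using True eps[of "inv ?\<sigma> k"] by (subst OC_apply) auto
    finally show ?thesis .
  next
    case False
    then have "k \<notin> ?S \<or> c' \<noteq> c" using Ssub by auto
    then show ?thesis unfolding x weyl_act_def using c t False
      by (cases "c' < length comps"; cases "fst (comps ! c')") (auto simp: OC_apply fund_weight_apply)
  qed
qed

lemma perm_exists:
  assumes S: "S \<subseteq> {1..N}" "card S = i" and i: "i \<le> N"
  shows "\<exists>\<sigma>. \<sigma> permutes {1..N} \<and> \<sigma> ` {1..i} = S"
proof -
  have fS: "finite S" using S(1) finite_subset by blast
  obtain f where f: "bij_betw f {1..i} S" using finite_same_card_bij[of "{1..i}" S] fS S(2) by auto
  have "card {i+1..N} = card ({1..N} - S)" using S i fS by (simp add: card_Diff_subset)
  then obtain g where g: "bij_betw g {i+1..N} ({1..N} - S)" using finite_same_card_bij[of "{i+1..N}" "{1..N} - S"] by auto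
  define \<sigma> where "\<sigma> x = (if x \<in> {1..i} then f x else if x \<in> {i+1..N} then g x else x)" for x
  have b1: "bij_betw \<sigma> {1..i} S" using f by (rule bij_betw_cong[THEN iffD1, rotated]) (simp add: \<sigma>_def)
  have b2: "bij_betw \<sigma> {i+1..N} ({1..N} - S)" using g by (rule bij_betw_cong[THEN iffD1, rotated]) (auto simp: \<sigma>_def)
  have "bij_betw \<sigma> ({1..i} \<union> {i+1..N}) (S \<union> ({1..N} - S))" by (rule bij_betw_combine[OF b1 b2]) auto
  moreover have "{1..i} \<union> {i+1..N} = {1..N}" using i by auto
  moreover have "S \<union> ({1..N} - S) = {1..N}" using S by auto
  ultimately have b: "bij_betw \<sigma> {1..N} {1..N}" by simp
  have "\<sigma> permutes {1..N}" by (rule bij_imp_permutes[OF b]) (use i in \<open>auto simp: \<sigma>_def\<close>)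
  moreover have "\<sigma> ` {1..i} = S" using b1 by (simp add: bij_betw_def)
  ultimately show ?thesis by blast
qed

lemma id_permutes: "id permutes A" unfolding permutes_def by auto

lemma orbitA:
  assumes c: "c < length comps" and t: "comps ! c = (TypeA, r)" and i: "i \<le> r"
  shows "weyl_orbit comps (fund_weight c i) = OA c r ` {S. S \<subseteq> {1..<r+2} \<and> card S = i}"
proof (intro equalityI subsetI)
  fix x assume "x \<in> weyl_orbit comps (fund_weight c i)"
  then obtain w where w: "w \<in> weyl_group comps" "x = weyl_act comps w (fund_weight c i)"
    unfolding weyl_orbit_def by blast
  have p: "fst w c permutes {1..r + 1}" using w c t by (auto simp: weyl_group_iff n_coords_def)
  have "fst w c ` {1..i} \<subseteq> fst w c ` {1..r+1}" using i by (intro image_mono) auto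
  then have "fst w c ` {1..i} \<subseteq> {1..<r+2}" using permutes_image[OF p] by auto
  moreover have "card (fst w c ` {1..i}) = i" using perm_image_card[OF p] by simp
  ultimately show "x \<in> OA c r ` {S. S \<subseteq> {1..<r+2} \<and> card S = i}"
    using wact_A[OF c t w(1) i] w(2) by blast
next
  fix x assume "x \<in> OA c r ` {S. S \<subseteq> {1..<r+2} \<and> card S = i}"
  then obtain S where S0: "S \<subseteq> {1..<r+2}" "card S = i" "x = OA c r S" by auto
  then have S: "S \<subseteq> {1..r+1}" "card S = i" "x = OA c r S" by auto
  obtain \<sigma> where \<sigma>: "\<sigma> permutes {1..r+1}" "\<sigma> ` {1..i} = S" using perm_exists[OF S(1,2)] i by auto
  define w where "w = ((\<lambda>c'. if c' = c then \<sigma> else id), (\<lambda>(c'::nat) (j::nat). 1::int))"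
  have w: "w \<in> weyl_group comps"
    unfolding weyl_group_iff w_def using \<sigma> t by (auto simp: n_coords_def id_permutes)
  have "weyl_act comps w (fund_weight c i) = x"
    using wact_A[OF c t w i] \<sigma> S by (simp add: w_def)
  then show "x \<in> weyl_orbit comps (fund_weight c i)" unfolding weyl_orbit_def using w by blast
qed

lemma orbitC:
  assumes c: "c < length comps" and t: "comps ! c = (TypeC, r)" and i: "i \<le> r"
  shows "weyl_orbit comps (fund_weight c i) = OC c ` {(S, T). S \<subseteq> {1..<r+1} \<and> card S = i \<and> T \<subseteq> S}"
proof (intro equalityI subsetI)
  fix x assume "x \<in> weyl_orbit comps (fund_weight c i)"
  then obtain w where w: "w \<in> weyl_group comps" "x = weyl_act comps w (fund_weight c i)"
    unfolding weyl_orbit_def by blast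
  have p: "fst w c permutes {1..r}" using w c t by (auto simp: weyl_group_iff n_coords_def)
  have "fst w c ` {1..i} \<subseteq> fst w c ` {1..r}" using i by (intro image_mono) auto
  then have "fst w c ` {1..i} \<subseteq> {1..<r+1}" using permutes_image[OF p] by auto
  moreover have "card (fst w c ` {1..i}) = i" using perm_image_card[OF p] by simp
  ultimately show "x \<in> OC c ` {(S, T). S \<subseteq> {1..<r+1} \<and> card S = i \<and> T \<subseteq> S}"
    using wact_C[OF c t w(1) i] w(2) by force
next
  fix x assume "x \<in> OC c ` {(S, T). S \<subseteq> {1..<r+1} \<and> card S = i \<and> T \<subseteq> S}"
  then obtain S T where S0: "S \<subseteq> {1..<r+1}" "card S = i" "T \<subseteq> S" "x = OC c (S, T)" by auto
  then have S: "S \<subseteq> {1..r}" "card S = i" "T \<subseteq> S" "x = OC c (S, T)" by auto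
  obtain \<sigma> where \<sigma>: "\<sigma> permutes {1..r}" "\<sigma> ` {1..i} = S" using perm_exists[OF S(1,2)] i by auto
  define \<epsilon> where "\<epsilon> j = (if \<sigma> j \<in> T then 1 else - 1 :: int)" for j
  define w where "w = ((\<lambda>c'. if c' = c then \<sigma> else id), (\<lambda>(c'::nat). if c' = c then \<epsilon> else (\<lambda>j::nat. 1::int)))"
  have w: "w \<in> weyl_group comps"
    unfolding weyl_group_iff w_def using \<sigma> t by (auto simp: n_coords_def id_permutes \<epsilon>_def)
  have T: "{k \<in> S. \<epsilon> (inv \<sigma> k) = 1} = T"
    using S(3) permutes_inverses(1)[OF \<sigma>(1)] by (auto simp: \<epsilon>_def)
  have "weyl_act comps w (fund_weight c i) = x"
    using wact_C[OF c t w i] \<sigma> S T by (simp add: w_def)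
  then show "x \<in> weyl_orbit comps (fund_weight c i)" unfolding weyl_orbit_def using w by blast
qed

lemma injA:
  assumes i: "i \<le> r"
  shows "inj_on (OA c r) {S. S \<subseteq> {1..<r+2} \<and> card S = i}"
proof (rule inj_onI)
  fix S S' assume S: "S \<in> {S. S \<subseteq> {1..<r+2} \<and> card S = i}" and S': "S' \<in> {S. S \<subseteq> {1..<r+2} \<and> card S = i}"
    and eq: "OA c r S = OA c r S'"
  have fS: "finite S" "finite S'" using S S' finite_subset by auto
  have H: "(if k \<in> S then 1 else 0) - (if r + 1 \<in> S then 1 else 0) =
      ((if k \<in> S' then 1 else 0) - (if r + 1 \<in> S' then 1 else 0) :: int)" if "1 \<le> k" "k \<le> r" for k
    using fun_cong[OF eq, of "(c, k)"] that fS by (simp add: OA_apply)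
  have full: False if F1: "r + 1 \<in> A" and F2: "r + 1 \<notin> B" and F3: "A \<in> {S. S \<subseteq> {1..<r+2} \<and> card S = i}"
    and F4:
    "\<And>k. 1 \<le> k \<Longrightarrow> k \<le> r \<Longrightarrow> (if k \<in> A then 1 else 0) - (if r + 1 \<in> A then 1 else 0) =
      ((if k \<in> B then 1 else 0) - (if r + 1 \<in> B then 1 else 0) :: int)" for A B
  proof -
    have "k \<in> A" if "1 \<le> k" "k \<le> r" for k using F4[OF that] F1 F2
      by (auto split: if_splits)
    then have "{1..r+1} \<subseteq> A" using F1 by (auto simp: le_Suc_eq)
    moreover have "finite A" using F3 finite_subset by auto
    ultimately have "card {1..r+1} \<le> card A" by (rule card_mono[rotated])
    then show False using F3 i by simp
  qed
  show "S = S'"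
  proof (cases "r + 1 \<in> S \<longleftrightarrow> r + 1 \<in> S'")
    case True
    have "k \<in> S \<longleftrightarrow> k \<in> S'" for k
    proof (cases "1 \<le> k \<and> k \<le> r")
      case True2: True
      then show ?thesis using H[of k] True by (auto split: if_splits)
    next
      case False
      show ?thesis
      proof (cases "k = r + 1")
        case True3: True
        then show ?thesis using True by simp
      next
        case False3: False
        then have "k \<notin> S" "k \<notin> S'" using S S' False by auto
        then show ?thesis by simp
      qed
    qed
    then show ?thesis by blast
  next
    case False
    have H': "(if k \<in> S' then 1 else 0) - (if r + 1 \<in> S' then 1 else 0) =
      ((if k \<in> S then 1 else 0) - (if r + 1 \<in> S then 1 else 0) :: int)" if "1 \<le> k" "k \<le> r" for k
      using H[OF that] by simp
    show ?thesis
    proof (cases "r + 1 \<in> S")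
      case True
      then have "r + 1 \<notin> S'" using False by blast
      from full[OF True this S H] show ?thesis ..
    next
      case False2: False
      then have "r + 1 \<in> S'" using False by blast
      from full[OF this False2 S' H'] show ?thesis ..
    qed
  qed
qed

lemma injC:
  "inj_on (OC c) {(S, T). S \<subseteq> {1..<r+1} \<and> card S = i \<and> T \<subseteq> S}"
proof (rule inj_onI)
  fix ST ST' assume A: "ST \<in> {(S, T). S \<subseteq> {1..<r+1} \<and> card S = i \<and> T \<subseteq> S}"
    and B: "ST' \<in> {(S, T). S \<subseteq> {1..<r+1} \<and> card S = i \<and> T \<subseteq> S}" and eq: "OC c ST = OC c ST'"
  obtain S T where st: "ST = (S, T)" by (cases ST)
  obtain S' T' where st': "ST' = (S', T')" by (cases ST')
  have fS: "finite S" "finite S'" "T \<subseteq> S" "T' \<subseteq> S'" using A B st st' finite_subset by auto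
  have "S = {k. OC c (S, T) (c, k) \<noteq> 0}" using fS by (auto simp: OC_apply)
  moreover have "S' = {k. OC c (S', T') (c, k) \<noteq> 0}" using fS by (auto simp: OC_apply)
  moreover have "T = {k. OC c (S, T) (c, k) = 1}" using fS by (auto simp: OC_apply)
  moreover have "T' = {k. OC c (S', T') (c, k) = 1}" using fS by (auto simp: OC_apply)
  ultimately show "ST = ST'" using eq st st' by simp
qed

lemma sumA:
  assumes c: "c < length comps" and t: "comps ! c = (TypeA, r)" and i: "i \<le> r"
  shows "(\<Sum>x\<in>weyl_orbit comps (fund_weight c i). (XX x :: weight \<Rightarrow>\<^sub>0 'r::comm_ring_1))
     = esym (\<lambda>j. XX (ebar c r j)) 1 (r + 2) i"
proof -
  let ?A = "{S. S \<subseteq> {1..<r+2} \<and> card S = i}"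
  have "(\<Sum>x\<in>weyl_orbit comps (fund_weight c i). (XX x :: weight \<Rightarrow>\<^sub>0 'r)) = (\<Sum>S\<in>?A. XX (OA c r S))"
    unfolding orbitA[OF c t i] by (rule sum.reindex[OF injA[OF i], unfolded comp_def])
  also have "\<dots> = (\<Sum>S\<in>?A. \<Prod>j\<in>S. XX (ebar c r j))"
  proof (rule sum.cong[OF refl])
    fix S assume "S \<in> ?A"
    then have "finite S" using finite_subset by auto
    then show "(XX (OA c r S) :: weight \<Rightarrow>\<^sub>0 'r) = (\<Prod>j\<in>S. XX (ebar c r j))"
      unfolding OA_def by (rule XX_sum)
  qed
  finally show ?thesis by (simp add: esym_def)
qed

lemma sumC:
  assumes c: "c < length comps" and t: "comps ! c = (TypeC, r)" and i: "i \<le> r"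
  shows "(\<Sum>x\<in>weyl_orbit comps (fund_weight c i). (XX x :: weight \<Rightarrow>\<^sub>0 'r::comm_ring_1))
     = esym (\<lambda>j. XX (ind (c, j)) + XX (- ind (c, j))) 1 (r + 1) i"
proof -
  let ?A = "{S. S \<subseteq> {1..<r+1} \<and> card S = i}"
  let ?P = "{(S, T). S \<subseteq> {1..<r+1} \<and> card S = i \<and> T \<subseteq> S}"
  have P: "?P = Sigma ?A Pow" by auto
  have "(\<Sum>x\<in>weyl_orbit comps (fund_weight c i). (XX x :: weight \<Rightarrow>\<^sub>0 'r)) = (\<Sum>ST\<in>?P. XX (OC c ST))"
    unfolding orbitC[OF c t i] by (rule sum.reindex[OF injC, unfolded comp_def])
  also have "\<dots> = (\<Sum>(S, T)\<in>Sigma ?A Pow. XX (OC c (S, T)))"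
    unfolding P by (rule sum.cong) auto
  also have "\<dots> = (\<Sum>S\<in>?A. \<Sum>T\<in>Pow S. XX (OC c (S, T)))"
    by (rule sum.Sigma[symmetric]) (auto simp: fin_subsets intro: finite_subset)
  also have "\<dots> = (\<Sum>S\<in>?A. \<Prod>j\<in>S. XX (ind (c, j)) + XX (- ind (c, j)))"
  proof (rule sum.cong[OF refl])
    fix S assume "S \<in> ?A"
    then have fS: "finite S" using finite_subset by auto
    have "(\<Sum>T\<in>Pow S. (XX (OC c (S, T)) :: weight \<Rightarrow>\<^sub>0 'r)) =
        (\<Sum>T\<in>Pow S. (\<Prod>j\<in>T. XX (ind (c, j))) * (\<Prod>j\<in>S - T. XX (- ind (c, j))))"
    proof (rule sum.cong[OF refl])
      fix T assume "T \<in> Pow S"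
      then have "finite T" using fS finite_subset by auto
      then show "(XX (OC c (S, T)) :: weight \<Rightarrow>\<^sub>0 'r) = (\<Prod>j\<in>T. XX (ind (c, j))) * (\<Prod>j\<in>S - T. XX (- ind (c, j)))"
        unfolding OC_def using fS by (simp add: XX_add XX_sum)
    qed
    also have "\<dots> = (\<Prod>j\<in>S. XX (ind (c, j)) + XX (- ind (c, j)))"
      by (rule prod_add[OF fS, symmetric])
    finally show "(\<Sum>T\<in>Pow S. (XX (OC c (S, T)) :: weight \<Rightarrow>\<^sub>0 'r)) = (\<Prod>j\<in>S. XX (ind (c, j)) + XX (- ind (c, j)))" .
  qed
  finally show ?thesis by (simp add: esym_def)
qed

definition c0f :: "(cartan_type \<times> nat) list \<Rightarrow> nat \<Rightarrow> nat \<Rightarrow> (weight \<Rightarrow>\<^sub>0 'r::comm_ring_1)" where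
  "c0f comps c j = (if j = 0 then 1 else of_nat (card (weyl_orbit comps (fund_weight c j))))"

lemma c0f_const: "c0f comps c j \<in> group_ring (supp_set {})"
  unfolding c0f_def using sr_1[OF sr_group_ring] sr_of_nat[OF sr_group_ring] by auto

lemma comp_all:
  assumes c: "c < length comps" and t: "comps ! c = (t, r)" and r: "1 \<le> r"
    and W: "\<And>j. 1 \<le> j \<Longrightarrow> j \<le> r \<Longrightarrow> (c, j) \<in> Wd" and one: "(1::'r::comm_ring_1) \<noteq> 0"
  shows "\<exists>F. eqv (group_ring (supp_set Wd)) r (\<lambda>p. (rho comps (fund_weight c (Suc p)) :: weight \<Rightarrow>\<^sub>0 'r)) F \<and>
      (\<forall>p<r. F p \<in> group_ring (supp_set (Dc c (Suc p))) \<and> divp (c, Suc p) (supp_set (Dc c (Suc p))) (F p))"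
proof (cases t)
  case TypeA
  have t': "comps ! c = (TypeA, r)" using t TypeA by simp
  have ex: "\<exists>F. eqv (group_ring (supp_set Wd)) r
      (\<lambda>p. esym (\<lambda>j. XX (ebar c r j)) 1 (r + 2) (Suc p) - (c0f comps c (Suc p) :: weight \<Rightarrow>\<^sub>0 'r)) F \<and>
      (\<forall>p<r. F p \<in> group_ring (supp_set (Dc c (Suc p))) \<and> divp (c, Suc p) (supp_set (Dc c (Suc p))) (F p))"
    by (rule compA[where ?c0.0="c0f comps c", OF r _ c0f_const W one]) (simp add: c0f_def)
  have rq: "rho comps (fund_weight c (Suc p)) = esym (\<lambda>j. XX (ebar c r j)) 1 (r + 2) (Suc p) - (c0f comps c (Suc p) :: weight \<Rightarrow>\<^sub>0 'r)"
    if "p < r" for p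
    unfolding rho_def c0f_def using sumA[OF c t', of "Suc p"] that by simp
  from ex show ?thesis
  proof (elim exE conjE)
    fix F assume F1: "eqv (group_ring (supp_set Wd)) r
      (\<lambda>p. esym (\<lambda>j. XX (ebar c r j)) 1 (r + 2) (Suc p) - (c0f comps c (Suc p) :: weight \<Rightarrow>\<^sub>0 'r)) F"
      and F2: "\<forall>p<r. F p \<in> group_ring (supp_set (Dc c (Suc p))) \<and> divp (c, Suc p) (supp_set (Dc c (Suc p))) (F p)"
    show ?thesis by (intro exI[of _ F] conjI eqv_cong[OF F1] F2) (auto simp: rq)
  qed
next
  case TypeC
  have t': "comps ! c = (TypeC, r)" using t TypeC by simp
  have ex: "\<exists>F. eqv (group_ring (supp_set Wd)) r
      (\<lambda>p. esym (\<lambda>j. XX (ind (c, j)) + XX (- ind (c, j))) 1 (r + 1) (Suc p) - (c0f comps c (Suc p) :: weight \<Rightarrow>\<^sub>0 'r)) F \<and>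
      (\<forall>p<r. F p \<in> group_ring (supp_set (Dc c (Suc p))) \<and> divp (c, Suc p) (supp_set (Dc c (Suc p))) (F p))"
    by (rule compC[where ?c0.0="c0f comps c", OF r _ c0f_const W one]) (simp add: c0f_def)
  have rq: "rho comps (fund_weight c (Suc p)) = esym (\<lambda>j. XX (ind (c, j)) + XX (- ind (c, j))) 1 (r + 1) (Suc p) - (c0f comps c (Suc p) :: weight \<Rightarrow>\<^sub>0 'r)"
    if "p < r" for p
    unfolding rho_def c0f_def using sumC[OF c t', of "Suc p"] that by simp
  from ex show ?thesis
  proof (elim exE conjE)
    fix F assume F1: "eqv (group_ring (supp_set Wd)) r
      (\<lambda>p. esym (\<lambda>j. XX (ind (c, j)) + XX (- ind (c, j))) 1 (r + 1) (Suc p) - (c0f comps c (Suc p) :: weight \<Rightarrow>\<^sub>0 'r)) F"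
      and F2: "\<forall>p<r. F p \<in> group_ring (supp_set (Dc c (Suc p))) \<and> divp (c, Suc p) (supp_set (Dc c (Suc p))) (F p)"
    show ?thesis by (intro exI[of _ F] conjI eqv_cong[OF F1] F2) (auto simp: rq)
  qed

qed

definition blk :: "(cartan_type \<times> nat) list \<Rightarrow> nat \<Rightarrow> (nat \<times> nat) list" where
  "blk comps c = map (\<lambda>j. (c, j)) [1..<snd (comps ! c) + 1]"

definition cl :: "(cartan_type \<times> nat) list \<Rightarrow> nat \<Rightarrow> (nat \<times> nat) list" where
  "cl comps k = concat (map (blk comps) [0..<k])"

lemma cl_0: "cl comps 0 = []" by (simp add: cl_def)
lemma cl_Suc: "cl comps (Suc k) = cl comps k @ blk comps k" by (simp add: cl_def)

lemma set_blk: "set (blk comps c) = {(c', j). c' = c \<and> 1 \<le> j \<and> j \<le> snd (comps ! c)}"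
  by (auto simp: blk_def)

lemma length_blk: "length (blk comps c) = snd (comps ! c)" by (simp add: blk_def)

lemma nth_blk: "m < snd (comps ! c) \<Longrightarrow> blk comps c ! m = (c, Suc m)"
  by (simp add: blk_def del: upt_Suc)

lemma set_take_blk: "p \<le> snd (comps ! c) \<Longrightarrow> set (take p (blk comps c)) = {(c', j). c' = c \<and> 1 \<le> j \<and> j \<le> p}"
proof -
  assume "p \<le> snd (comps ! c)"
  then have "take p (blk comps c) = map (\<lambda>j. (c, j)) [1..<p + 1]"
    by (simp add: blk_def take_map del: upt_Suc)
  then show ?thesis by auto
qed

lemma set_cl: "set (cl comps k) = {(c, j). c < k \<and> 1 \<le> j \<and> j \<le> snd (comps ! c)}"
  by (induction k) (auto simp: cl_0 cl_Suc set_blk less_Suc_eq)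

lemma distinct_cl: "distinct (cl comps k)"
proof (induction k)
  case 0 then show ?case by (simp add: cl_0)
next
  case (Suc k)
  have "distinct (blk comps k)" by (simp add: blk_def distinct_map inj_on_def)
  moreover have "set (cl comps k) \<inter> set (blk comps k) = {}" by (auto simp: set_cl set_blk)
  ultimately show ?case using Suc by (simp add: cl_Suc)
qed

lemma fund_weights_cl: "fund_weights comps = map (\<lambda>(c, j). fund_weight c j) (cl comps (length comps))"
  unfolding fund_weights_def cl_def blk_def by (simp add: map_concat comp_def)

lemma weight_lattice_cl: "weight_lattice comps = supp_set (set (cl comps (length comps)))"
  unfolding weight_lattice_def supp_set_def set_cl by auto

lemma ind_sum_eval:
  assumes d: "distinct l" and p: "p \<le> length l"
  shows "(\<Sum>j<p. zsmult (k j) (ind (l ! j))) y = (if y \<in> set (take p l) then k (THE j. j < p \<and> l ! j = y) else 0)"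
proof -
  have "(\<Sum>j<p. zsmult (k j) (ind (l ! j))) y = (\<Sum>j<p. if l ! j = y then k j else 0)"
    unfolding sum_fun_app by (intro sum.cong) (auto simp: zsmult_def ind_def)
  also have "\<dots> = (if y \<in> set (take p l) then k (THE j. j < p \<and> l ! j = y) else 0)"
  proof (cases "y \<in> set (take p l)")
    case True
    then obtain j0 where j0: "j0 < p" "l ! j0 = y" using p by (auto simp: in_set_conv_nth)
    have u: "l ! j = y \<longleftrightarrow> j = j0" if "j < p" for j
      using nth_eq_iff_index_eq[OF d, of j j0] j0 that p by auto
    have th: "(THE j. j < p \<and> l ! j = y) = j0" using u j0 by blast
    have "(\<Sum>j<p. if l ! j = y then k j else 0) = (\<Sum>j<p. if j = j0 then k j else 0)"
      using u by (intro sum.cong) auto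
    then show ?thesis using True j0 th by simp
  next
    case False
    have "l ! j \<noteq> y" if "j < p" for j using False that p by (auto simp: in_set_conv_nth)
    then show ?thesis using False by simp
  qed
  finally show ?thesis .
qed

lemma span_first_eq:
  assumes d: "distinct l" and p: "p \<le> length l"
  shows "span_first (map ind l) p = supp_set (set (take p l))"
proof (intro equalityI subsetI)
  fix v assume "v \<in> span_first (map ind l) p"
  then obtain k where v: "v = (\<Sum>j<p. zsmult (k j) (map ind l ! j))" by (auto simp: span_first_def)
  have "v = (\<Sum>j<p. zsmult (k j) (ind (l ! j)))" unfolding v using p by (intro sum.cong) auto
  then show "v \<in> supp_set (set (take p l))" using ind_sum_eval[OF d p, of k] by (auto simp: supp_set_iff)
next
  fix v assume v: "v \<in> supp_set (set (take p l))"
  define k where "k j = v (l ! j)" for j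
  have "v = (\<Sum>j<p. zsmult (k j) (ind (l ! j)))"
  proof
    fix y
    show "v y = (\<Sum>j<p. zsmult (k j) (ind (l ! j))) y"
    proof (cases "y \<in> set (take p l)")
      case True
      then obtain j0 where j0: "j0 < p" "l ! j0 = y" using p by (auto simp: in_set_conv_nth)
      have u: "l ! j = y \<longleftrightarrow> j = j0" if "j < p" for j
        using nth_eq_iff_index_eq[OF d, of j j0] j0 that p by auto
      have "(THE j. j < p \<and> l ! j = y) = j0" using u j0 by blast
      then show ?thesis using ind_sum_eval[OF d p, of k y] True j0 by (simp add: k_def)
    next
      case False
      have "v y = 0" using v False unfolding supp_set_iff by blast
      then show ?thesis using ind_sum_eval[OF d p, of k y] False by simp
    qed
  qed
  also have "\<dots> = (\<Sum>j<p. zsmult (k j) (map ind l ! j))" using p by (intro sum.cong) auto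
  finally show "v \<in> span_first (map ind l) p" by (auto simp: span_first_def)
qed

lemma Z_basis:
  assumes d: "distinct l"
  shows "is_Z_basis (supp_set (set l)) (map ind l)"
  unfolding is_Z_basis_def
proof (intro conjI ballI)
  show "set (map ind l) \<subseteq> supp_set (set l)" by (auto intro: ind_supp)
next
  fix x assume x: "x \<in> supp_set (set l)"
  have sp: "x \<in> span_first (map ind l) (length l)" using span_first_eq[OF d order_refl] x by simp
  then obtain k where k: "x = (\<Sum>j<length l. zsmult (k j) (map ind l ! j))" by (auto simp: span_first_def)
  define k' where "k' j = (if j < length l then k j else 0)" for j
  have ex: "(\<forall>i. length (map ind l) \<le> i \<longrightarrow> k' i = 0) \<and> x = (\<Sum>i<length (map ind l). zsmult (k' i) (map ind l ! i))"
    using k by (auto simp: k'_def intro!: sum.cong)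
  have un: "k1 = k'" if "(\<forall>i. length (map ind l) \<le> i \<longrightarrow> k1 i = 0) \<and> x = (\<Sum>i<length (map ind l). zsmult (k1 i) (map ind l ! i))" for k1
  proof
    fix j
    show "k1 j = k' j"
    proof (cases "j < length l")
      case True
      have e: "(\<Sum>i<length l. zsmult (k1 i) (map ind l ! i)) = (\<Sum>i<length l. zsmult (k1 i) (ind (l ! i)))"
        by (intro sum.cong) auto
      have e2: "(\<Sum>i<length l. zsmult (k' i) (map ind l ! i)) = (\<Sum>i<length l. zsmult (k' i) (ind (l ! i)))"
        by (intro sum.cong) auto
      have th: "(THE i. i < length l \<and> l ! i = l ! j) = j"
        using True nth_eq_iff_index_eq[OF d, of _ j] by (intro the_equality) auto
      have "x (l ! j) = k1 j" using that ind_sum_eval[OF d order_refl, of k1 "l ! j"] True th e by simp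
      moreover have "x (l ! j) = k' j" using ex ind_sum_eval[OF d order_refl, of k' "l ! j"] True th e2 by simp
      ultimately show ?thesis by simp
    next
      case False
      then show ?thesis using that by (simp add: k'_def)
    qed
  qed
  show "\<exists>!k. (\<forall>i. length (map ind l) \<le> i \<longrightarrow> k i = 0) \<and> x = (\<Sum>i<length (map ind l). zsmult (k i) (map ind l ! i))"
    using ex un by blast
qed

definition good :: "(nat \<times> nat) list \<Rightarrow> nat \<Rightarrow> (weight \<Rightarrow>\<^sub>0 'r::comm_ring_1) \<Rightarrow> bool" where
  "good l i F \<longleftrightarrow> F \<in> group_ring (supp_set (set (take (Suc i) l))) \<and>
     (\<exists>\<nu>. \<nu> - zsmult (\<nu> (l ! i)) (ind (l ! i)) \<in> supp_set (set (take i l)) \<and> Poly_Mapping.lookup F \<nu> = 1 \<and>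
        (\<forall>x\<in>Poly_Mapping.keys F. \<nu> (l ! i) \<le> x (l ! i) \<and> (x (l ! i) = \<nu> (l ! i) \<longrightarrow> x = \<nu>)))"

lemma good_append: assumes "i < length l" "good l i F" shows "good (l @ l') i F"
proof -
  have e1: "take (Suc i) (l @ l') = take (Suc i) l" and e2: "take i (l @ l') = take i l" and e3: "(l @ l') ! i = l ! i"
    using assms(1) by (auto simp: nth_append)
  show ?thesis using assms(2) unfolding good_def e1 e2 e3 .
qed

lemma good_comp:
  assumes l: "l = l0 @ blk comps k" and i: "i = length l0 + p" and p: "p < snd (comps ! k)"
    and F: "F \<in> group_ring (supp_set (Dc k (Suc p)))" "divp (k, Suc p) (supp_set (Dc k (Suc p))) F"
  shows "good l i F"
proof -
  let ?pt = "(k, Suc p)"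
  have li: "l ! i = ?pt" using l i p by (simp add: nth_append nth_blk)
  have t1: "take (Suc i) l = l0 @ take (Suc p) (blk comps k)" using l i by simp
  have t2: "take i l = l0 @ take p (blk comps k)" using l i by simp
  have D1: "Dc k (Suc p) \<subseteq> set (take (Suc i) l)"
    unfolding t1 using set_take_blk[of "Suc p" comps k] p by (auto simp: Dc_def)
  have D0: "Dc k p \<subseteq> set (take i l)"
    unfolding t2 using set_take_blk[of p comps k] p by (auto simp: Dc_def)
  obtain \<nu> where nu: "\<nu> \<in> supp_set (Dc k (Suc p))" "Poly_Mapping.lookup F \<nu> = 1"
    "\<forall>x\<in>Poly_Mapping.keys F. \<nu> ?pt \<le> x ?pt \<and> (x ?pt = \<nu> ?pt \<longrightarrow> x = \<nu>)"
    using F(2) unfolding divp_def by blast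
  have "\<nu> - zsmult (\<nu> ?pt) (ind ?pt) \<in> supp_set (Dc k p)"
    unfolding supp_set_iff
  proof (intro allI impI)
    fix x assume x: "x \<notin> Dc k p"
    show "(\<nu> - zsmult (\<nu> ?pt) (ind ?pt)) x = 0"
    proof (cases "x = ?pt")
      case True then show ?thesis by (simp add: zsmult_def ind_def)
    next
      case False
      then have "x \<notin> Dc k (Suc p)" using x by (auto simp: Dc_def)
      then have "\<nu> x = 0" using nu(1) unfolding supp_set_iff by blast
      then show ?thesis using False by (simp add: zsmult_def ind_def)
    qed
  qed
  then have "\<nu> - zsmult (\<nu> (l ! i)) (ind (l ! i)) \<in> supp_set (set (take i l))"
    using supp_set_mono[OF D0] li by auto
  moreover have "F \<in> group_ring (supp_set (set (take (Suc i) l)))"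
    using F(1) group_ring_mono[OF supp_set_mono[OF D1]] by auto
  ultimately show ?thesis unfolding good_def using nu(2,3) li by auto
qed

lemma nth_notin_take: "distinct l \<Longrightarrow> i < length l \<Longrightarrow> l ! i \<notin> set (take i l)"
proof
  assume d: "distinct l" and i: "i < length l" and m: "l ! i \<in> set (take i l)"
  then obtain j where j: "j < length (take i l)" "take i l ! j = l ! i" by (auto simp: in_set_conv_nth)
  then have "j < i" "l ! j = l ! i" by auto
  then show False using nth_eq_iff_index_eq[OF d, of j i] i by simp
qed

lemma good_flat:
  assumes d: "distinct l" and i: "i < length l" and g: "good l i F"
  shows "F \<in> group_ring (span_first (map ind l) (Suc i)) \<and> is_divisor (map ind l) i F"
proof
  show "F \<in> group_ring (span_first (map ind l) (Suc i))"
  proof -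
    have "span_first (map ind l) (Suc i) = supp_set (set (take (Suc i) l))" using span_first_eq[OF d, of "Suc i"] i by simp
    then show ?thesis using g unfolding good_def by simp
  qed
next
  let ?q = "l ! i"
  obtain \<nu> where nu: "\<nu> - zsmult (\<nu> ?q) (ind ?q) \<in> supp_set (set (take i l))" "Poly_Mapping.lookup F \<nu> = 1"
    "\<forall>x\<in>Poly_Mapping.keys F. \<nu> ?q \<le> x ?q \<and> (x ?q = \<nu> ?q \<longrightarrow> x = \<nu>)"
    using g unfolding good_def by blast
  define k where "k = \<nu> ?q"
  define \<mu> where "\<mu> = \<nu> - zsmult k (ind ?q)"
  have sp: "span_first (map ind l) i = supp_set (set (take i l))" using span_first_eq[OF d, of i] i by simp
  have bi: "map ind l ! i = ind ?q" using i by simp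
  have nq: "?q \<notin> set (take i l)" by (rule nth_notin_take[OF d i])
  have mu_nu: "\<mu> + zsmult k (ind ?q) = \<nu>" unfolding \<mu>_def by simp
  show "is_divisor (map ind l) i F"
    unfolding is_divisor_def
  proof (intro exI[of _ k] exI[of _ \<mu>] conjI ballI allI impI)
    show "\<mu> \<in> span_first (map ind l) i" using nu(1) sp by (simp add: \<mu>_def k_def)
    show "Poly_Mapping.lookup F (\<mu> + zsmult k (map ind l ! i)) = 1" using nu(2) mu_nu bi by simp
  next
    fix x \<mu>' k' assume x: "x \<in> Poly_Mapping.keys F" and h: "\<mu>' \<in> span_first (map ind l) i \<and> x = \<mu>' + zsmult k' (map ind l ! i)"
    have "\<mu>' \<in> supp_set (set (take i l))" using h sp by simp
    then have "\<mu>' ?q = 0" using nq unfolding supp_set_iff by blast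
    then have xq: "x ?q = k'" using h bi by (simp add: zsmult_def ind_def)
    show "k \<le> k'" using nu(3) x xq by (auto simp: k_def)
    assume "k' = k"
    then have "x = \<nu>" using nu(3) x xq by (auto simp: k_def)
    then show "\<mu>' = \<mu>" using h bi \<open>k' = k\<close> unfolding \<mu>_def by (simp add: algebra_simps)
  qed
qed

lemma eqv_zero: "sr Q \<Longrightarrow> eqv Q 0 q q'"
  by (rule eqv_cong[OF eqv_refl, of Q 0 q]) auto

lemma main_ind:
  fixes comps :: "(cartan_type \<times> nat) list"
  assumes one: "(1::'r::comm_ring_1) \<noteq> 0" and rk: "\<forall>tr \<in> set comps. snd tr \<ge> 1" and k: "k \<le> length comps"
  shows "\<exists>F. eqv (group_ring (supp_set (set (cl comps (length comps))))) (length (cl comps k))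
     (\<lambda>i. (rho comps (fund_weight (fst (cl comps k ! i)) (snd (cl comps k ! i))) :: weight \<Rightarrow>\<^sub>0 'r)) F \<and>
     (\<forall>i<length (cl comps k). good (cl comps k) i (F i))"
  using k
proof (induction k)
  case 0
  show ?case by (intro exI[of _ "\<lambda>_. 0"] conjI) (simp_all add: cl_0 eqv_zero sr_group_ring)
next
  case (Suc k)
  let ?Q = "group_ring (supp_set (set (cl comps (length comps)))) :: (weight \<Rightarrow>\<^sub>0 'r) set"
  have Q: "sr ?Q" by (rule sr_group_ring)
  have kl: "k < length comps" using Suc.prems by simp
  obtain F where F: "eqv ?Q (length (cl comps k))
     (\<lambda>i. (rho comps (fund_weight (fst (cl comps k ! i)) (snd (cl comps k ! i))) :: weight \<Rightarrow>\<^sub>0 'r)) F"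
     "\<forall>i<length (cl comps k). good (cl comps k) i (F i)"
    using Suc.IH Suc.prems by auto
  define r where "r = snd (comps ! k)"
  have t: "comps ! k = (fst (comps ! k), r)" by (simp add: r_def)
  have r1: "1 \<le> r" using rk kl unfolding r_def by (metis nth_mem)
  have W: "(k, j) \<in> set (cl comps (length comps))" if "1 \<le> j" "j \<le> r" for j
    using that kl by (simp add: set_cl r_def)
  obtain G where G: "eqv ?Q r (\<lambda>p. (rho comps (fund_weight k (Suc p)) :: weight \<Rightarrow>\<^sub>0 'r)) G"
    "\<forall>p<r. G p \<in> group_ring (supp_set (Dc k (Suc p))) \<and> divp (k, Suc p) (supp_set (Dc k (Suc p))) (G p)"
    using comp_all[OF kl t r1 W one] by blast
  define n where "n = length (cl comps k)"
  have e: "eqv ?Q (n + r)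
     (\<lambda>i. if i < n then (rho comps (fund_weight (fst (cl comps k ! i)) (snd (cl comps k ! i))) :: weight \<Rightarrow>\<^sub>0 'r)
          else rho comps (fund_weight k (Suc (i - n))))
     (\<lambda>i. if i < n then F i else G (i - n))"
    using eqv_block[OF Q F(1)[folded n_def] G(1)] .
  have len: "length (cl comps (Suc k)) = n + r" by (simp add: cl_Suc n_def length_blk r_def)
  have nth: "cl comps (Suc k) ! i = (if i < n then cl comps k ! i else (k, Suc (i - n)))" if "i < n + r" for i
    using that by (simp add: cl_Suc nth_append n_def nth_blk r_def)
  show ?case
  proof (intro exI[of _ "\<lambda>i. if i < n then F i else G (i - n)"] conjI allI impI)
    show "eqv ?Q (length (cl comps (Suc k)))
      (\<lambda>i. rho comps (fund_weight (fst (cl comps (Suc k) ! i)) (snd (cl comps (Suc k) ! i))))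
      (\<lambda>i. if i < n then F i else G (i - n))"
      unfolding len by (rule eqv_cong[OF e]) (simp_all add: nth)
  next
    fix i assume i: "i < length (cl comps (Suc k))"
    show "good (cl comps (Suc k)) i (if i < n then F i else G (i - n))"
    proof (cases "i < n")
      case True
      then show ?thesis using F(2) good_append[of i "cl comps k" "F i" "blk comps k"] by (simp add: cl_Suc n_def)
    next
      case False
      then have p: "i - n < r" "i = n + (i - n)" using i len by auto
      have "good (cl comps k @ blk comps k) i (G (i - n))"
        using G(2) p by (intro good_comp[of _ "cl comps k" comps k i "i - n"]) (auto simp: n_def r_def)
      then show ?thesis using False by (simp add: cl_Suc)
    qed
  qed
qed

theorem mainTheorem2:
  fixes comps :: "(cartan_type \<times> nat) list"
  assumes "surj (of_int :: int \<Rightarrow> 'r::comm_ring_1)"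
      and "(0::'r) \<noteq> 1"
      and "\<forall>tr \<in> set comps. snd tr \<ge> 1"
  shows "\<exists>b. is_Z_basis (weight_lattice comps) b \<and>
             gen_flat (weight_lattice comps) b
               (\<lambda>i. (rho comps (fund_weights comps ! i) :: weight \<Rightarrow>\<^sub>0 'r))"
proof -
  let ?l = "cl comps (length comps)"
  let ?b = "map ind ?l"
  have one: "(1::'r) \<noteq> 0" using assms(2) by simp
  have d: "distinct ?l" by (rule distinct_cl)
  obtain F where F: "eqv (group_ring (supp_set (set ?l))) (length ?l)
     (\<lambda>i. (rho comps (fund_weight (fst (?l ! i)) (snd (?l ! i))) :: weight \<Rightarrow>\<^sub>0 'r)) F"
     "\<forall>i<length ?l. good ?l i (F i)"
    using main_ind[OF one assms(3) order_refl] by blast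
  obtain A where A: "gl (group_ring (supp_set (set ?l))) (length ?l) A"
    "\<forall>j<length ?l. F j = (\<Sum>i<length ?l. (rho comps (fund_weight (fst (?l ! i)) (snd (?l ! i))) :: weight \<Rightarrow>\<^sub>0 'r) * A i j)"
    using F(1) unfolding eqv_def by blast
  have fw: "fund_weights comps ! i = fund_weight (fst (?l ! i)) (snd (?l ! i))" if "i < length ?l" for i
    using that by (simp add: fund_weights_cl case_prod_beta)
  have sumeq: "(\<Sum>i<length ?b. (rho comps (fund_weights comps ! i) :: weight \<Rightarrow>\<^sub>0 'r) * A i j) = F j"
    if "j < length ?l" for j
    using A(2) that fw by (auto intro!: sum.cong)
  have "gen_flat (weight_lattice comps) ?b (\<lambda>i. (rho comps (fund_weights comps ! i) :: weight \<Rightarrow>\<^sub>0 'r))"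
    unfolding gen_flat_def
  proof (intro exI[of _ A] conjI)
    show "in_GL (length ?b) (weight_lattice comps) A"
      unfolding in_GL_gl weight_lattice_cl using A(1) by simp
    show "flat ?b (\<lambda>j. \<Sum>i<length ?b. (rho comps (fund_weights comps ! i) :: weight \<Rightarrow>\<^sub>0 'r) * A i j)"
      unfolding flat_def
    proof (intro allI impI)
      fix i assume i: "i < length ?b"
      then have i': "i < length ?l" by simp
      show "(\<Sum>i'<length ?b. (rho comps (fund_weights comps ! i') :: weight \<Rightarrow>\<^sub>0 'r) * A i' i) \<in> group_ring (span_first ?b (Suc i)) \<and>
          is_divisor ?b i (\<Sum>i'<length ?b. (rho comps (fund_weights comps ! i') :: weight \<Rightarrow>\<^sub>0 'r) * A i' i)"
        unfolding sumeq[OF i'] using good_flat[OF d i'] F(2) i' by blast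
    qed
  qed
  moreover have "is_Z_basis (weight_lattice comps) ?b"
    unfolding weight_lattice_cl by (rule Z_basis[OF d])
  ultimately show ?thesis by blast
qed

end
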